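(* Let $\lambda_1\ge0$ and $\lambda_2=0$, let $P_n$ be the monic polynomials orthogonal with respect to $\langle f,g\rangle_F=\int_{\mathbb R}fg\,e^{-x^4}dx$ and $Q_n$ the monic polynomials orthogonal with respect to $\langle f,g\rangle_S=\int_{\mathbb R}fg\,e^{-x^4}dx+\lambda_1f(0)g(0)$. Then $$\lim_{n\to\infty}\frac{P_n(\sqrt[4]{n}\,x)}{Q_n(\sqrt[4]{n}\,x)}=\sqrt[4]{12}\,\frac{x\,\varphi\big(\sqrt[4]{3/4}\,x\big)}{1+\varphi^2\big(\sqrt[4]{3/4}\,x\big)}$$ uniformly on compact subsets of $\mathbb C\setminus[-\sqrt[4]{4/3},\sqrt[4]{4/3}]$.
   Context: $\varphi(z)=z+\sqrt{z^2-1}$, with the branch of the square root chosen so that $\sqrt{z^2-1}>0$ for $z>1$; i.e. $\varphi$ is the conformal map of $\mathbb C\setminus[-1,1]$ onto the exterior of the closed unit disk. *)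

theory Defs
  imports "HOL-Analysis.Analysis" "HOL-Computational_Algebra.Polynomial"
begin

text \<open>Conformal map of C minus [-1,1] onto the exterior of the closed unit disk:
  phi z = z + sqrt(z^2-1), with the branch sqrt(z^2-1) = sqrt(z-1) sqrt(z+1)
  (principal square roots), which is analytic off [-1,1] and positive for z > 1.\<close>
definition phi :: "complex \<Rightarrow> complex" where
  "phi z = z + csqrt (z - 1) * csqrt (z + 1)"

definition freud_ip :: "real poly \<Rightarrow> real poly \<Rightarrow> real" where
  "freud_ip f g = integral\<^sup>L lborel (\<lambda>x. poly f x * poly g x * exp (- (x ^ 4)))"

definition sob_ip :: "real \<Rightarrow> real poly \<Rightarrow> real poly \<Rightarrow> real" where
  "sob_ip lam1 f g = freud_ip f g + lam1 * poly f 0 * poly g 0"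

definition monic_orthogonal_sequence ::
    "(real poly \<Rightarrow> real poly \<Rightarrow> real) \<Rightarrow> (nat \<Rightarrow> real poly) \<Rightarrow> bool" where
  "monic_orthogonal_sequence ip P \<longleftrightarrow>
     (\<forall>n. degree (P n) = n \<and> lead_coeff (P n) = 1 \<and>
          (\<forall>q. degree q < n \<longrightarrow> ip (P n) q = 0))"

end

theory Submission
  imports Defs "HOL-Probability.Probability" "HOL-Real_Asymp.Real_Asymp"
begin


definition LF :: "real poly \<Rightarrow> real" where
  "LF p = integral\<^sup>L lborel (\<lambda>x. poly p x * exp (- (x ^ 4)))"

lemma exp_bound4: "exp (- ((x::real) ^ 4)) \<le> exp (1/2) * exp (- x\<^sup>2 / 2)"
proof -
  have "- (x ^ 4) \<le> 1/2 + (- x\<^sup>2 / 2)"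
    using sum_squares_ge_zero[of "x\<^sup>2 - 1/4" 0] by (simp add: power2_eq_square power4_eq_xxxx algebra_simps) 
  moreover have e: "exp (1/2) * exp (- x\<^sup>2 / 2) = exp (1/2 - x\<^sup>2 / 2)"
    by (simp add: exp_add[symmetric])
  ultimately show ?thesis by (subst e) simp
qed

lemma integrable_mono4: "integrable lborel (\<lambda>x::real. x ^ k * exp (- (x ^ 4)))"
proof (rule Bochner_Integration.integrable_bound)
  show "integrable lborel (\<lambda>x. (sqrt (2*pi) * exp (1/2)) * (std_normal_density x * \<bar>x\<bar>^k))"
    by (intro integrable_mult_right integrable_std_normal_moment_abs)
  show "(\<lambda>x::real. x ^ k * exp (- (x ^ 4))) \<in> borel_measurable lborel" by measurable
  show "AE x in lborel. norm (x ^ k * exp (- (x ^ 4))) \<le> norm ((sqrt (2*pi) * exp (1/2)) * (std_normal_density x * \<bar>x\<bar>^k))"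
  proof (rule AE_I2)
    fix x :: real
    have "norm (x ^ k * exp (- (x ^ 4))) = \<bar>x\<bar>^k * exp (- (x ^ 4))" by (simp add: abs_mult power_abs)
    also have "\<dots> \<le> \<bar>x\<bar>^k * (exp (1/2) * exp (- x\<^sup>2 / 2))"
      by (intro mult_left_mono exp_bound4) auto
    also have "\<dots> = (sqrt (2*pi) * exp (1/2)) * (std_normal_density x * \<bar>x\<bar>^k)"
      by (simp add: std_normal_density_def real_sqrt_mult)
    also have "\<dots> \<le> norm \<dots>" by simp
    finally show "norm (x ^ k * exp (- (x ^ 4))) \<le> norm ((sqrt (2*pi) * exp (1/2)) * (std_normal_density x * \<bar>x\<bar>^k))" .
  qed
qed

lemma integrable_poly4: "integrable lborel (\<lambda>x::real. poly p x * exp (- (x ^ 4)))"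
proof -
  have "(\<lambda>x::real. poly p x * exp (- (x ^ 4))) = (\<lambda>x. \<Sum>i\<le>degree p. coeff p i * (x ^ i * exp (- (x ^ 4))))"
    by (auto simp: poly_altdef sum_distrib_right mult.assoc)
  moreover have "integrable lborel (\<lambda>x. \<Sum>i\<le>degree p. coeff p i * (x ^ i * exp (- (x ^ 4))))"
    by (rule Bochner_Integration.integrable_sum) (intro integrable_mult_right integrable_mono4)
  ultimately show ?thesis by simp
qed

lemma LF_add: "LF (p + q) = LF p + LF q"
  unfolding LF_def by (simp add: distrib_right integrable_poly4)

lemma LF_smult: "LF (smult c p) = c * LF p"
  unfolding LF_def by (simp add: mult.assoc)

lemma LF_diff: "LF (p - q) = LF p - LF q"
  unfolding LF_def by (simp add: left_diff_distrib integrable_poly4)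

lemma LF_minus: "LF (- p) = - LF p"
  unfolding LF_def by simp

lemma LF_0[simp]: "LF 0 = 0" unfolding LF_def by simp

lemma freud_ip_LF: "freud_ip f g = LF (f * g)"
  unfolding freud_ip_def LF_def by simp

lemma LF_refl: "LF (pcompose p [:0, -1:]) = LF p"
  unfolding LF_def
  by (subst lborel_integral_real_affine[where c="-1" and t=0]) (simp_all add: poly_pcompose)

lemma LF_pos: assumes "p \<noteq> 0" shows "LF (p * p) > 0"
proof -
  let ?f = "\<lambda>x. poly (p*p) x * exp (- (x ^ 4))"
  have nn: "AE x in lborel. 0 \<le> ?f x" by (intro AE_I2) simp
  have ge: "LF (p*p) \<ge> 0" unfolding LF_def by (intro integral_nonneg_AE nn)
  have "LF (p*p) \<noteq> 0"
  proof
    assume "LF (p*p) = 0"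
    then have "AE x in lborel. ?f x = 0"
      unfolding LF_def using integral_nonneg_eq_0_iff_AE[OF integrable_poly4 nn] by simp
    moreover have "AE x in lborel. x \<notin> {x. poly p x = 0}"
      by (intro AE_not_in finite_imp_null_set_lborel poly_roots_finite assms)
    ultimately have "AE x in lborel. ?f x = 0 \<and> x \<notin> {x. poly p x = 0}"
      by (rule eventually_conj)
    then obtain N where N: "{x \<in> space lborel. \<not> (?f x = 0 \<and> x \<notin> {x. poly p x = 0})} \<subseteq> N"
      "emeasure lborel N = 0" "N \<in> sets lborel" by (rule AE_E)
    have "{x \<in> space lborel. \<not> (?f x = 0 \<and> x \<notin> {x. poly p x = 0})} = UNIV" by auto
    with N have "UNIV \<subseteq> N" by simp
    then have "N = UNIV" by auto
    with N(2) show False by simp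
  qed
  with ge show ?thesis by simp
qed

lemma mono_tendsto_top: "((\<lambda>x::real. x ^ i * exp (- (x ^ 4))) \<longlongrightarrow> 0) at_top"
proof -
  have lim: "((\<lambda>x::real. (x ^ 4) ^ i / exp (x ^ 4)) \<longlongrightarrow> 0) at_top"
    by (rule filterlim_compose[OF tendsto_power_div_exp_0 filterlim_pow_at_top[OF _ filterlim_ident]]) auto
  show ?thesis
  proof (rule Lim_null_comparison[OF _ lim])
    have "norm (x ^ i * exp (- (x ^ 4))) \<le> (x ^ 4) ^ i / exp (x ^ 4)" if "x \<ge> 1" for x :: real
    proof -
      have "\<bar>x\<bar> ^ i \<le> (x ^ 4) ^ i"
        using that by (simp add: power_mult[symmetric] power_increasing)
      then show ?thesis using that by (simp add: abs_mult power_abs exp_minus divide_inverse)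
    qed
    then show "\<forall>\<^sub>F x in at_top. norm (x ^ i * exp (- (x ^ 4))) \<le> (x ^ 4) ^ i / exp (x ^ 4)"
      by (intro eventually_at_top_linorderI[of 1]) auto
  qed
qed

lemma mono_tendsto_bot: "((\<lambda>x::real. x ^ i * exp (- (x ^ 4))) \<longlongrightarrow> 0) at_bot"
proof -
  have "((\<lambda>x::real. (-1)^i * ((-x) ^ i * exp (- ((-x) ^ 4)))) \<longlongrightarrow> (-1)^i * 0) at_bot"
    by (intro tendsto_mult tendsto_const filterlim_compose[OF mono_tendsto_top filterlim_uminus_at_top_at_bot])
  moreover have "(\<lambda>x::real. (-1)^i * ((-x) ^ i * exp (- ((-x) ^ 4)))) = (\<lambda>x. x ^ i * exp (- (x ^ 4)))"
  proof
    fix x :: real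
    have a: "(-x)^i = (-1::real)^i * x^i" by (rule power_minus)
    have b0: "(-1::real)^i * (-1)^i = ((-1)*(-1))^i" by (rule power_mult_distrib[symmetric])
    have b: "(-1::real)^i * (-1)^i = 1" unfolding b0 by simp
    have c: "(-x)^4 = x^(4::nat)" by simp
    show "(-1::real)^i * ((-x) ^ i * exp (- ((-x) ^ 4))) = x ^ i * exp (- (x ^ 4))"
      unfolding a c mult.assoc[symmetric] b by simp
  qed
  ultimately show ?thesis by simp
qed

lemma poly_tendsto: 
  shows "((\<lambda>x::real. poly p x * exp (- (x ^ 4))) \<longlongrightarrow> 0) at_top"
    and "((\<lambda>x::real. poly p x * exp (- (x ^ 4))) \<longlongrightarrow> 0) at_bot"
proof -
  have eq: "(\<lambda>x::real. poly p x * exp (- (x ^ 4))) = (\<lambda>x. \<Sum>i\<le>degree p. coeff p i * (x ^ i * exp (- (x ^ 4))))"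
    by (auto simp: poly_altdef sum_distrib_right mult.assoc)
  show "((\<lambda>x::real. poly p x * exp (- (x ^ 4))) \<longlongrightarrow> 0) at_top"
    unfolding eq using tendsto_sum[of "{..degree p}" "\<lambda>i x. coeff p i * (x ^ i * exp (- (x ^ 4)))" "\<lambda>_. 0" at_top]
    by (simp add: tendsto_mult_right_zero mono_tendsto_top)
  show "((\<lambda>x::real. poly p x * exp (- (x ^ 4))) \<longlongrightarrow> 0) at_bot"
    unfolding eq using tendsto_sum[of "{..degree p}" "\<lambda>i x. coeff p i * (x ^ i * exp (- (x ^ 4)))" "\<lambda>_. 0" at_bot]
    by (simp add: tendsto_mult_right_zero mono_tendsto_bot)
qed

lemma e4: "((\<lambda>x::real. exp (- (x ^ 4))) has_real_derivative (exp (- (x ^ 4)) * (- (4 * x^3)))) (at x)"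
  by (auto intro!: derivative_eq_intros)

lemma LF_deriv: "LF (pderiv p) = LF (monom 4 3 * p)"
proof -
  let ?q = "pderiv p - monom 4 3 * p"
  let ?F = "\<lambda>x::real. poly p x * exp (- (x ^ 4))"
  have "(LBINT x=-\<infinity>..\<infinity>. poly ?q x * exp (- (x ^ 4))) = 0 - 0"
  proof (rule interval_integral_FTC_integrable[where F="?F"])
    fix x :: real
    show "(?F has_vector_derivative poly ?q x * exp (- (x ^ 4))) (at x)"
      using DERIV_mult[OF poly_DERIV e4, of p x]
      by (simp add: poly_monom algebra_simps has_real_derivative_iff_has_vector_derivative)
    show "isCont (\<lambda>x. poly ?q x * exp (- (x ^ 4))) x" by (intro continuous_intros)
  next
    show "set_integrable lborel (einterval (-\<infinity>) \<infinity>) (\<lambda>x. poly ?q x * exp (- (x ^ 4)))"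
    proof -
      have "einterval (-\<infinity>) \<infinity> = UNIV" by auto
      then show ?thesis unfolding set_integrable_def using integrable_poly4[of ?q] by simp
    qed
    show "((?F \<circ> real_of_ereal) \<longlongrightarrow> 0) (at_right (-\<infinity>))"
      unfolding ereal_tendsto_simps by (rule poly_tendsto)
    show "((?F \<circ> real_of_ereal) \<longlongrightarrow> 0) (at_left \<infinity>)"
      unfolding ereal_tendsto_simps by (rule poly_tendsto)
  qed simp
  then have "LF ?q = 0"
    by (simp add: LF_def interval_lebesgue_integral_def set_lebesgue_integral_def)
  then show ?thesis by (simp add: LF_diff)
qed




lemma sqrt_pred_bound: assumes "real n * e \<ge> 1" "e \<le> 1" "e \<ge> 0" "n \<ge> 1"
  shows "(1 - e) * sqrt (real n) \<le> sqrt (real (n - 1))"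
proof -
  have "(1 - e)\<^sup>2 * real n \<le> (1 - e) * real n"
    using assms by (intro mult_right_mono) (auto simp: power2_eq_square intro: mult_left_le)
  also have "\<dots> \<le> real (n - 1)" using assms by (simp add: of_nat_diff algebra_simps)
  finally have "sqrt ((1 - e)\<^sup>2 * real n) \<le> sqrt (real (n - 1))" by (rule real_sqrt_le_mono)
  then show ?thesis using assms by (simp add: real_sqrt_mult)
qed

lemma sqrt_succ_bound: assumes "real n * e \<ge> 1" "e \<ge> 0"
  shows "sqrt (real (Suc n)) \<le> (1 + e) * sqrt (real n)"
proof -
  have "real (Suc n) \<le> (1 + e) * real n" using assms by (simp add: algebra_simps)
  also have "\<dots> \<le> (1 + e)\<^sup>2 * real n"
    using assms by (intro mult_right_mono) (auto simp: power2_eq_square)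
  finally have "sqrt (real (Suc n)) \<le> sqrt ((1 + e)\<^sup>2 * real n)" by (rule real_sqrt_le_mono)
  then show ?thesis using assms by (simp add: real_sqrt_mult)
qed

lemma freud_limit:
  fixes b :: "nat \<Rightarrow> real"
  assumes b0: "b 0 = 0" and nn: "\<And>n. b n \<ge> 0"
    and eq: "\<And>n. n \<ge> 1 \<Longrightarrow> 4 * b n * (b (n - 1) + b n + b (Suc n)) = real n"
  shows "(\<lambda>n. b n / sqrt (real n)) \<longlonglongrightarrow> 1 / sqrt 12"
proof -
  define s where "s n = b n / sqrt (real n)" for n
  have s_nn: "s n \<ge> 0" for n using nn[of n] by (simp add: s_def)
  have bs: "b n = s n * sqrt (real n)" for n
    by (cases "n = 0") (auto simp: s_def b0)
  have s_le: "s n \<le> 1/2" for n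
  proof (cases "n = 0")
    case True then show ?thesis by (simp add: s_def)
  next
    case False
    have "4 * b n * b n \<le> 4 * b n * (b (n - 1) + b n + b (Suc n))"
      using nn[of n] nn[of "n - 1"] nn[of "Suc n"] by (intro mult_left_mono) auto
    with eq[of n] False have "(2 * b n)\<^sup>2 \<le> real n" by (simp add: power2_eq_square)
    then have "2 * b n \<le> sqrt (real n)" using nn[of n] real_le_rsqrt by blast
    then show ?thesis using False by (simp add: s_def field_simps)
  qed
  define L where "L = Limsup sequentially (\<lambda>n. ereal (s n))"
  define l where "l = Liminf sequentially (\<lambda>n. ereal (s n))"
  have lL: "l \<le> L" unfolding l_def L_def by (rule Liminf_le_Limsup) simp
  have l0: "0 \<le> l" unfolding l_def by (rule Liminf_bounded) (simp add: s_nn)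
  have L1: "L \<le> ereal (1/2)" unfolding L_def by (rule Limsup_bounded) (intro always_eventually allI, use s_le in force)
  define Lr where "Lr = real_of_ereal L"
  define lr where "lr = real_of_ereal l"
  have L_eq: "L = ereal Lr" and l_eq: "l = ereal lr"
    using lL l0 L1 unfolding Lr_def lr_def by (cases L; cases l; auto)+
  have Lr0: "0 \<le> lr" "lr \<le> Lr" using lL l0 by (auto simp: L_eq l_eq)
  have ev_up: "\<exists>N. \<forall>n\<ge>N. s n < Lr + e" if "e > 0" for e
  proof -
    have "eventually (\<lambda>n. ereal (s n) < ereal (Lr + e)) sequentially"
      by (rule Limsup_lessD) (use that in \<open>simp add: L_def[symmetric] L_eq\<close>)
    then show ?thesis by (simp add: eventually_sequentially)
  qed
  have ev_lo: "\<exists>N. \<forall>n\<ge>N. s n > lr - e" if "e > 0" for e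
  proof -
    have "eventually (\<lambda>n. ereal (s n) > ereal (lr - e)) sequentially"
      by (rule less_LiminfD) (use that in \<open>simp add: l_def[symmetric] l_eq\<close>)
    then show ?thesis by (simp add: eventually_sequentially)
  qed
  have fr_up: "\<exists>n\<ge>M. s n > Lr - e" if "e > 0" for e M
  proof (rule ccontr)
    assume "\<not> ?thesis"
    then have "eventually (\<lambda>n. ereal (s n) \<le> ereal (Lr - e)) sequentially"
      by (auto simp: eventually_sequentially not_less)
    then have "L \<le> ereal (Lr - e)" unfolding L_def by (rule Limsup_bounded)
    with that show False by (simp add: L_eq)
  qed
  have fr_lo: "\<exists>n\<ge>M. s n < lr + e" if "e > 0" for e M
  proof (rule ccontr)
    assume "\<not> ?thesis"
    then have "eventually (\<lambda>n. ereal (lr + e) \<le> ereal (s n)) sequentially"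
      by (auto simp: eventually_sequentially not_less)
    then have "ereal (lr + e) \<le> l" unfolding l_def by (rule Liminf_bounded)
    with that show False by (simp add: l_eq)
  qed
  have key: "real n = 4 * (s n * sqrt (real n)) * (s (n - 1) * sqrt (real (n - 1)) + s n * sqrt (real n) + s (Suc n) * sqrt (real (Suc n)))"
    if "n \<ge> 1" for n
    using eq[OF that] unfolding bs[symmetric] by simp
  define f where "f e = 4 * max 0 (Lr - e) * (max 0 (lr - e) * (1 - e) + max 0 (Lr - e) + max 0 (lr - e))" for e :: real
  have f_le: "f e \<le> 1" if e: "0 < e" "e < 1" for e
  proof -
    obtain N where N: "\<forall>n\<ge>N. s n > lr - e" using ev_lo[OF e(1)] by blast
    obtain n where n: "n \<ge> N + 2 + nat \<lceil>1/e\<rceil>" "s n > Lr - e" using fr_up[OF e(1)] by blast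
    have n1: "n \<ge> 1" using n by simp
    have ne: "real n * e \<ge> 1"
    proof -
      have "real n \<ge> 1 / e" using n(1) by linarith
      then show ?thesis using e by (simp add: field_simps)
    qed
    have A: "s n \<ge> max 0 (Lr - e)" using n s_nn[of n] by simp
    have B: "s (n - 1) \<ge> max 0 (lr - e)" using N n(1) s_nn[of "n - 1"] by (simp add: less_imp_le)
    have C: "s (Suc n) \<ge> max 0 (lr - e)" using N n(1) s_nn[of "Suc n"] by (simp add: less_imp_le)
    have sq1: "(1 - e) * sqrt (real n) \<le> sqrt (real (n - 1))"
      by (rule sqrt_pred_bound) (use ne e n1 in auto)
    have sq2: "sqrt (real n) \<le> sqrt (real (Suc n))" by simp
    let ?a = "max 0 (lr - e)" and ?c = "max 0 (Lr - e)" and ?r = "sqrt (real n)"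
    have "?a * ((1 - e) * ?r) \<le> s (n - 1) * sqrt (real (n - 1))"
      by (rule mult_mono[OF B sq1 s_nn]) (use e in simp)
    then have "?a * (1 - e) * ?r \<le> s (n - 1) * sqrt (real (n - 1))" by (simp add: mult.assoc)
    moreover have "?c * ?r \<le> s n * ?r" using A by (simp add: mult_right_mono)
    moreover have "?a * ?r \<le> s (Suc n) * sqrt (real (Suc n))"
      by (rule mult_mono[OF C sq2 s_nn]) simp
    ultimately have S: "(?a * (1 - e) + ?c + ?a) * ?r \<le> s (n - 1) * sqrt (real (n - 1)) + s n * ?r + s (Suc n) * sqrt (real (Suc n))"
      by (simp add: algebra_simps)
    have "f e * real n = f e * (?r * ?r)" by simp
    also have "\<dots> = 4 * (?c * ?r) * ((?a * (1 - e) + ?c + ?a) * ?r)"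
    proof -
      have "f e * (r * r) = 4 * (?c * r) * ((?a * (1 - e) + ?c + ?a) * r)" for r :: real
        by (simp add: f_def algebra_simps)
      then show ?thesis .
    qed
    also have "\<dots> \<le> 4 * (s n * ?r) * (s (n - 1) * sqrt (real (n - 1)) + s n * ?r + s (Suc n) * sqrt (real (Suc n)))"
    proof (rule mult_mono[OF _ S])
      show "4 * (?c * ?r) \<le> 4 * (s n * ?r)" using A by (simp add: mult_right_mono)
      show "0 \<le> 4 * (s n * ?r)" using s_nn[of n] by simp
      show "0 \<le> (?a * (1 - e) + ?c + ?a) * ?r" using e by simp
    qed
    also have "\<dots> = real n" using key[OF n1] by simp
    finally show ?thesis using n1 by simp
  qed
  have up: "4 * Lr * (lr * 1 + Lr + lr) \<le> 1"
  proof -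
    have "(f \<longlongrightarrow> f 0) (at_right 0)" unfolding f_def by (intro tendsto_intros)
    moreover have "eventually (\<lambda>e. f e \<le> 1) (at_right 0)"
      unfolding eventually_at_right_field by (intro exI[of _ 1]) (auto intro: f_le)
    ultimately have "f 0 \<le> 1" by (rule tendsto_upperbound) simp
    then show ?thesis using Lr0 by (simp add: f_def)
  qed
  define g where "g e = 4 * (lr + e) * ((Lr + e) + (lr + e) + (Lr + e) * (1 + e))" for e :: real
  have g_ge: "1 \<le> g e" if e: "0 < e" "e < 1" for e
  proof -
    obtain N where N: "\<forall>n\<ge>N. s n < Lr + e" using ev_up[OF e(1)] by blast
    obtain n where n: "n \<ge> N + 2 + nat \<lceil>1/e\<rceil>" "s n < lr + e" using fr_lo[OF e(1)] by blast
    have n1: "n \<ge> 1" using n by simp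
    have ne: "real n * e \<ge> 1"
    proof -
      have "real n \<ge> 1 / e" using n(1) by linarith
      then show ?thesis using e by (simp add: field_simps)
    qed
    have B: "s (n - 1) \<le> Lr + e" using N n(1) by (simp add: less_imp_le)
    have C: "s (Suc n) \<le> Lr + e" using N n(1) by (simp add: less_imp_le)
    have sq2: "sqrt (real (Suc n)) \<le> (1 + e) * sqrt (real n)"
      by (rule sqrt_succ_bound) (use ne e in auto)
    have sq1: "sqrt (real (n - 1)) \<le> sqrt (real n)" by simp
    let ?r = "sqrt (real n)"
    have Le: "0 \<le> Lr + e" using Lr0 e by simp
    have "s (n - 1) * sqrt (real (n - 1)) \<le> (Lr + e) * ?r"
      by (rule mult_mono[OF B sq1 Le]) simp
    moreover have "s (Suc n) * sqrt (real (Suc n)) \<le> (Lr + e) * ((1 + e) * ?r)"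
      by (rule mult_mono[OF C sq2 Le]) simp
    moreover have "s n * ?r \<le> (lr + e) * ?r" using n(2) by (intro mult_right_mono) auto
    ultimately have S: "s (n - 1) * sqrt (real (n - 1)) + s n * ?r + s (Suc n) * sqrt (real (Suc n))
        \<le> ((Lr + e) + (lr + e) + (Lr + e) * (1 + e)) * ?r"
      by (simp add: algebra_simps)
    have "real n = 4 * (s n * ?r) * (s (n - 1) * sqrt (real (n - 1)) + s n * ?r + s (Suc n) * sqrt (real (Suc n)))"
      by (rule key[OF n1])
    also have "\<dots> \<le> 4 * ((lr + e) * ?r) * (((Lr + e) + (lr + e) + (Lr + e) * (1 + e)) * ?r)"
    proof (rule mult_mono[OF _ S])
      show "4 * (s n * ?r) \<le> 4 * ((lr + e) * ?r)" using n(2) by (simp add: mult_right_mono)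
      show "0 \<le> 4 * ((lr + e) * ?r)" using Lr0 e by simp
      show "0 \<le> s (n - 1) * sqrt (real (n - 1)) + s n * ?r + s (Suc n) * sqrt (real (Suc n))"
        using s_nn[of n] s_nn[of "n-1"] s_nn[of "Suc n"] by simp
    qed
    also have "\<dots> = g e * (?r * ?r)"
    proof -
      have "4 * ((lr + e) * r) * (((Lr + e) + (lr + e) + (Lr + e) * (1 + e)) * r) = g e * (r * r)" for r :: real
        by (simp add: g_def algebra_simps)
      then show ?thesis .
    qed
    also have "\<dots> = g e * real n" by simp
    finally show ?thesis using n1 by simp
  qed
  have lo: "1 \<le> 4 * lr * (Lr + lr + Lr * 1)"
  proof -
    have "(g \<longlongrightarrow> g 0) (at_right 0)" unfolding g_def by (intro tendsto_intros)
    moreover have "eventually (\<lambda>e. 1 \<le> g e) (at_right 0)"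
      unfolding eventually_at_right_field by (intro exI[of _ 1]) (auto intro: g_ge)
    ultimately have "1 \<le> g 0" by (rule tendsto_lowerbound) simp
    then show ?thesis by (simp add: g_def)
  qed
  have "Lr * Lr \<le> lr * lr" using up lo by (simp add: algebra_simps)
  then have "Lr \<le> lr" using Lr0 by (metis mult_strict_mono not_le order.strict_trans2 less_eq_real_def)
  then have eqL: "Lr = lr" using Lr0 by simp
  have c: "Lr = 1 / sqrt 12"
  proof -
    have "12 * Lr\<^sup>2 = 1" using up lo eqL by (simp add: algebra_simps power2_eq_square)
    then have "Lr\<^sup>2 = 1 / 12" by simp
    then have "sqrt (Lr\<^sup>2) = sqrt (1/12)" by (rule arg_cong)
    moreover have "sqrt (Lr\<^sup>2) = Lr" using Lr0 by simp
    ultimately show ?thesis by (simp add: real_sqrt_divide)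
  qed
  have "(\<lambda>n. ereal (s n)) \<longlonglongrightarrow> ereal Lr"
    by (rule Liminf_eq_Limsup) (auto simp: L_def[symmetric] l_def[symmetric] L_eq l_eq eqL)
  then have "s \<longlonglongrightarrow> Lr" by simp
  then show ?thesis using c by (simp add: s_def[abs_def])
qed

lemma ratio_limit:
  fixes b :: "nat \<Rightarrow> real" and c :: real
  assumes lim: "(\<lambda>n. b n / sqrt (real n)) \<longlonglongrightarrow> c" and c: "c > 0"
  shows "(\<lambda>n. b (Suc n) / b (Suc (Suc n))) \<longlonglongrightarrow> 1"
proof -
  have l1: "(\<lambda>n. b (Suc n) / sqrt (real (Suc n))) \<longlonglongrightarrow> c"
    using LIMSEQ_Suc[OF lim] .
  have l2: "(\<lambda>n. b (Suc (Suc n)) / sqrt (real (Suc (Suc n)))) \<longlonglongrightarrow> c"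
    using LIMSEQ_Suc[OF l1] .
  have l3: "(\<lambda>n. sqrt (real (Suc n)) / sqrt (real (Suc (Suc n)))) \<longlonglongrightarrow> 1"
    by real_asymp
  have "(\<lambda>n. (b (Suc n) / sqrt (real (Suc n))) / (b (Suc (Suc n)) / sqrt (real (Suc (Suc n))))
          * (sqrt (real (Suc n)) / sqrt (real (Suc (Suc n))))) \<longlonglongrightarrow> c / c * 1"
    by (intro tendsto_intros l1 l2 l3) (use c in simp)
  moreover have "(\<lambda>n. (b (Suc n) / sqrt (real (Suc n))) / (b (Suc (Suc n)) / sqrt (real (Suc (Suc n))))
          * (sqrt (real (Suc n)) / sqrt (real (Suc (Suc n))))) = (\<lambda>n. b (Suc n) / b (Suc (Suc n)))"
    by (auto simp: fun_eq_iff field_simps)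
  ultimately show ?thesis using c by simp
qed

lemma sumratio:
  fixes v :: "nat \<Rightarrow> real"
  assumes pos: "\<And>i. v i > 0" and rat: "(\<lambda>i. v (Suc i) / v i) \<longlonglongrightarrow> 1"
  shows "(\<lambda>m. v m / (\<Sum>i\<le>m. v i)) \<longlonglongrightarrow> 0"
proof (rule LIMSEQ_I)
  fix e :: real assume e: "e > 0"
  define M where "M = nat \<lceil>2 / e\<rceil>"
  define \<rho> where "\<rho> = 1 - 1 / (2 * real M + 2)"
  have \<rho>0: "0 < \<rho>" "\<rho> \<le> 1" by (auto simp: \<rho>_def field_simps)
  have \<rho>M: "\<rho> ^ M \<ge> 1/2"
  proof -
    have "1 + real M * (- 1 / (2 * real M + 2)) \<le> (1 + (- 1 / (2 * real M + 2))) ^ M"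
      by (rule Bernoulli_inequality) (simp add: field_simps)
    moreover have "1 + real M * (- 1 / (2 * real M + 2)) \<ge> 1/2" by (simp add: field_simps)
    ultimately have X: "1/2 \<le> (1 + (- 1 / (2 * real M + 2))) ^ M" by linarith
    have "\<rho> = 1 + (- 1 / (2 * real M + 2))" by (simp add: \<rho>_def)
    with X show ?thesis by simp
  qed
  have "eventually (\<lambda>i. v (Suc i) / v i < 1 / \<rho>) sequentially"
    by (rule order_tendstoD(2)[OF rat]) (use \<rho>0 in \<open>simp add: \<rho>_def field_simps\<close>)
  then obtain N where N: "\<And>i. i \<ge> N \<Longrightarrow> v (Suc i) / v i < 1 / \<rho>"
    by (auto simp: eventually_sequentially)
  have step: "v i \<ge> \<rho> * v (Suc i)" if "i \<ge> N" for i
  proof -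
    have "v (Suc i) < v i / \<rho>" using N[OF that] pos[of i] \<rho>0 by (simp add: field_simps)
    then show ?thesis using \<rho>0 by (simp add: field_simps)
  qed
  have chain: "v i \<ge> \<rho> ^ d * v (i + d)" if "i \<ge> N" for d i
    using that
  proof (induction d arbitrary: i)
    case 0 then show ?case by simp
  next
    case (Suc d)
    have "\<rho> ^ Suc d * v (i + Suc d) = \<rho> * (\<rho> ^ d * v (Suc i + d))" by simp
    also have "\<dots> \<le> \<rho> * v (Suc i)" using Suc.IH[of "Suc i"] Suc.prems \<rho>0 by (intro mult_left_mono) auto
    also have "\<dots> \<le> v i" by (rule step[OF Suc.prems])
    finally show ?case .
  qed
  show "\<exists>no. \<forall>m\<ge>no. norm (v m / (\<Sum>i\<le>m. v i) - 0) < e"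
  proof (intro exI allI impI)
    fix m assume m: "m \<ge> N + M"
    have half: "v i \<ge> v m / 2" if "i \<in> {m - M..m}" for i
    proof -
      have iN: "i \<ge> N" using that m by auto
      have "\<rho> ^ (m - i) \<ge> \<rho> ^ M" using that \<rho>0 by (intro power_decreasing) auto
      then have "\<rho> ^ (m - i) \<ge> 1/2" using \<rho>M by simp
      then have "\<rho> ^ (m - i) * v m \<ge> 1/2 * v m" using pos[of m] by (intro mult_right_mono) auto
      moreover have "v i \<ge> \<rho> ^ (m - i) * v (i + (m - i))" by (rule chain[OF iN])
      ultimately show ?thesis using that by simp
    qed
    have "real (card {m - M..m}) * (v m / 2) \<le> (\<Sum>i\<in>{m - M..m}. v i)"
      by (rule sum_bounded_below) (rule half)
    moreover have "card {m - M..m} = M + 1" using m by simp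
    moreover have "(\<Sum>i\<in>{m - M..m}. v i) \<le> (\<Sum>i\<le>m. v i)"
      by (rule sum_mono2) (auto intro: less_imp_le pos)
    ultimately have S: "(real M + 1) * (v m / 2) \<le> (\<Sum>i\<le>m. v i)" by (simp add: algebra_simps)
    have Spos: "(\<Sum>i\<le>m. v i) > 0" by (intro sum_pos pos) auto
    have "v m / (\<Sum>i\<le>m. v i) \<le> v m / ((real M + 1) * (v m / 2))"
      using S pos[of m] Spos by (intro divide_left_mono) (auto intro!: mult_pos_pos)
    also have "\<dots> = 2 / (real M + 1)"
    proof -
      have "v m \<noteq> 0" "real M + 1 \<noteq> 0" using pos[of m] by auto
      then show ?thesis by (simp add: divide_simps)
    qed
    also have "\<dots> < e"
    proof -
      have "real M \<ge> 2 / e" unfolding M_def by linarith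
      then have "real M + 1 > 2 / e" by simp
      then show ?thesis using e by (simp add: field_simps)
    qed
    finally show "norm (v m / (\<Sum>i\<le>m. v i) - 0) < e" using Spos pos[of m] by simp
  qed
qed

lemma sup_bound:
  fixes b :: "nat \<Rightarrow> real" and c :: real
  assumes lim: "(\<lambda>n. b n / sqrt (real n)) \<longlonglongrightarrow> c" and nn: "\<And>n. b n \<ge> 0" and eta: "\<eta> > 0" and c: "c \<ge> 0"
  shows "\<exists>N. \<forall>n\<ge>N. \<forall>k<n. b k \<le> (c + \<eta>) * sqrt (real n)"
proof -
  have "eventually (\<lambda>n. b n / sqrt (real n) < c + \<eta>) sequentially"
    by (rule order_tendstoD(2)[OF lim]) (use eta in simp)
  then obtain N0 where N0: "\<And>k. k \<ge> N0 \<Longrightarrow> b k / sqrt (real k) < c + \<eta>"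
    by (auto simp: eventually_sequentially)
  define B0 where "B0 = (\<Sum>k\<le>N0. b k)"
  define N where "N = max (Suc N0) (nat \<lceil>(B0 / (c + \<eta>))\<^sup>2\<rceil>)"
  have cpos: "c + \<eta> > 0" using c eta by simp
  show ?thesis
  proof (intro exI[of _ N] allI impI)
    fix n k assume n: "n \<ge> N" and k: "k < n"
    show "b k \<le> (c + \<eta>) * sqrt (real n)"
    proof (cases "k \<ge> N0 \<and> k > 0")
      case True
      then have k0: "k > 0" by simp
      have "b k < (c + \<eta>) * sqrt (real k)" using N0[of k] True by (simp add: field_simps)
      also have "\<dots> \<le> (c + \<eta>) * sqrt (real n)" using k cpos by (intro mult_left_mono) auto
      finally show ?thesis by simp
    next
      case False
      have "b k \<le> B0" unfolding B0_def using False nn by (intro member_le_sum) auto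
      also have "B0 \<le> (c + \<eta>) * sqrt (real n)"
      proof -
        have B0nn: "B0 \<ge> 0" unfolding B0_def by (intro sum_nonneg nn)
        have "real n \<ge> (B0 / (c + \<eta>))\<^sup>2" using n unfolding N_def by linarith
        then have "sqrt (real n) \<ge> B0 / (c + \<eta>)" using B0nn cpos
          by (metis real_le_rsqrt)
        then show ?thesis using cpos by (simp add: field_simps)
      qed
      finally show ?thesis .
    qed
  qed
qed




lemma inv_bound_Im: assumes "Im w \<noteq> 0" shows "cmod (inverse w) \<le> 1 / \<bar>Im w\<bar>"
proof -
  have "\<bar>Im w\<bar> \<le> cmod w" by (rule abs_Im_le_cmod)
  moreover have "cmod w > 0" using assms by auto
  ultimately have "1 / cmod w \<le> 1 / \<bar>Im w\<bar>" using assms by (intro divide_left_mono) (auto intro!: mult_pos_pos)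
  then show ?thesis by (simp add: norm_inverse divide_inverse)
qed

lemma Im_inverse_sign: "Im w * Im (inverse w) \<le> 0"
proof -
  have "Im (inverse w) = - Im w / ((Re w)\<^sup>2 + (Im w)\<^sup>2)" by (simp add: complex_is_Real_iff power2_eq_square)
  then show ?thesis by (simp add: divide_nonpos_nonneg mult_nonneg_nonpos)
qed

lemma half_plane_bound:
  fixes p :: "nat \<Rightarrow> complex" and b :: "nat \<Rightarrow> real" and y :: complex
  assumes p0: "p 0 = 1" and p1: "p 1 = y"
    and rec: "\<And>k. p (Suc (Suc k)) = y * p (Suc k) - of_real (b (Suc k)) * p k"
    and bnn: "\<And>k. b k \<ge> 0" and im: "Im y \<noteq> 0"
  shows "p (Suc k) \<noteq> 0 \<and> cmod (p k / p (Suc k)) \<le> 1 / \<bar>Im y\<bar> \<and> Im y * Im (p k / p (Suc k)) \<le> 0"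
proof (induction k)
  case 0
  have "y \<noteq> 0" using im by auto
  then show ?case using inv_bound_Im[OF im] Im_inverse_sign[of y] p0 p1 by (simp add: divide_inverse)
next
  case (Suc k)
  define r where "r = p k / p (Suc k)"
  define z where "z = y - of_real (b (Suc k)) * r"
  have pz: "p (Suc (Suc k)) = p (Suc k) * z"
    using Suc.IH by (simp add: rec z_def r_def algebra_simps)
  have "Im y * Im z = Im y * (Im y - b (Suc k) * Im r)" by (simp add: z_def)
  also have "\<dots> = (Im y)\<^sup>2 - b (Suc k) * (Im y * Im r)" by (simp add: algebra_simps power2_eq_square)
  finally have "Im y * Im z = (Im y)\<^sup>2 - b (Suc k) * (Im y * Im r)" .
  moreover have "b (Suc k) * (Im y * Im r) \<le> 0"
    using Suc.IH bnn[of "Suc k"] by (simp add: r_def mult_nonneg_nonpos)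
  ultimately have yz: "Im y * Im z \<ge> (Im y)\<^sup>2" by simp
  have imz: "\<bar>Im z\<bar> \<ge> \<bar>Im y\<bar>"
  proof -
    have "\<bar>Im y\<bar> * \<bar>Im y\<bar> \<le> \<bar>Im y\<bar> * \<bar>Im z\<bar>"
      using yz by (simp add: abs_mult[symmetric] power2_eq_square)
    then show ?thesis by (rule mult_left_le_imp_le) (use im in simp)
  qed
  then have imz0: "Im z \<noteq> 0" using im by auto
  then have z0: "z \<noteq> 0" by auto
  have r1: "p (Suc k) / p (Suc (Suc k)) = inverse z" using Suc.IH z0 by (simp add: pz divide_inverse)
  have "cmod (inverse z) \<le> 1 / \<bar>Im z\<bar>" by (rule inv_bound_Im[OF imz0])
  also have "\<dots> \<le> 1 / \<bar>Im y\<bar>" using imz im by (intro divide_left_mono) auto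
  finally have c1: "cmod (p (Suc k) / p (Suc (Suc k))) \<le> 1 / \<bar>Im y\<bar>" using r1 by simp
  have "Im y * Im (inverse z) \<le> 0"
  proof -
    have "Im z * Im (inverse z) \<le> 0" by (rule Im_inverse_sign)
    moreover have "Im y * Im z > 0" using yz im by (smt (verit) zero_less_power2)
    ultimately show ?thesis by (smt (verit) mult_less_0_iff mult_nonneg_nonneg mult_pos_pos zero_less_mult_iff)
  qed
  with c1 r1 Suc.IH z0 show ?case by (simp add: pz)
qed

lemma disk_bound:
  fixes p :: "nat \<Rightarrow> complex" and b :: "nat \<Rightarrow> real" and y :: complex
  assumes p0: "p 0 = 1" and p1: "p 1 = y"
    and rec: "\<And>k. p (Suc (Suc k)) = y * p (Suc k) - of_real (b (Suc k)) * p k"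
    and bnn: "\<And>k. b k \<ge> 0" and y0: "y \<noteq> 0" and bB: "\<And>k. k < n \<Longrightarrow> b k \<le> B"
    and yB: "4 * B \<le> (cmod y)\<^sup>2"
  shows "k < n \<Longrightarrow> p (Suc k) \<noteq> 0 \<and> cmod (p k / p (Suc k)) \<le> 2 / cmod y"
proof (induction k)
  case 0
  have "1 / cmod y \<le> 2 / cmod y" using y0 by (simp add: divide_right_mono)
  then show ?case using p0 p1 y0 by (simp add: norm_divide)
next
  case (Suc k)
  then have IH: "p (Suc k) \<noteq> 0" "cmod (p k / p (Suc k)) \<le> 2 / cmod y" by auto
  define r where "r = p k / p (Suc k)"
  define z where "z = y - of_real (b (Suc k)) * r"
  have pz: "p (Suc (Suc k)) = p (Suc k) * z"
    using IH by (simp add: rec z_def r_def algebra_simps)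
  have ym: "cmod y > 0" using y0 by simp
  have b1: "b (Suc k) \<le> B" using Suc.prems bB by simp
  have "cmod (of_real (b (Suc k)) * r) = b (Suc k) * cmod r" using bnn[of "Suc k"] by (simp add: norm_mult)
  also have "\<dots> \<le> B * (2 / cmod y)"
    using IH bnn[of "Suc k"] b1 unfolding r_def by (intro mult_mono) auto
  also have "\<dots> \<le> cmod y / 2"
  proof -
    have "B * 2 \<le> cmod y * cmod y / 2" using yB by (simp add: power2_eq_square)
    then show ?thesis using ym by (simp add: field_simps)
  qed
  finally have sm: "cmod (of_real (b (Suc k)) * r) \<le> cmod y / 2" .
  have "cmod y - cmod (of_real (b (Suc k)) * r) \<le> cmod z"
    unfolding z_def by (rule norm_triangle_ineq2)
  with sm have zb: "cmod z \<ge> cmod y / 2" by simp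
  then have z0: "z \<noteq> 0" using ym by auto
  have "cmod (p (Suc k) / p (Suc (Suc k))) = 1 / cmod z"
    using IH z0 by (simp add: pz norm_divide)
  also have "\<dots> \<le> 1 / (cmod y / 2)"
  proof -
    have "cmod z > 0" using z0 by simp
    then show ?thesis using zb ym by (intro divide_left_mono) (auto intro!: mult_pos_pos)
  qed
  also have "\<dots> = 2 / cmod y" by simp
  finally show ?case using IH z0 by (simp add: pz)
qed




lemma phi_identity:
  assumes "x \<noteq> 0"
  shows "complex_of_real (root 4 12) * (x * phi (complex_of_real (root 4 (3/4)) * x)
           / (1 + (phi (complex_of_real (root 4 (3/4)) * x))\<^sup>2)) = 1"
proof -
  define c where "c = root 4 (3/4)"
  have c0: "c > 0" by (simp add: c_def)
  have r12: "root 4 12 = 2 * c"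
  proof -
    have "root 4 12 = root 4 (16 * (3/4))" by simp
    also have "\<dots> = root 4 16 * c" unfolding c_def by (rule real_root_mult)
    also have "root 4 16 = 2" by (rule real_root_pos_unique) auto
    finally show ?thesis by simp
  qed
  define z where "z = complex_of_real c * x"
  have z0: "z \<noteq> 0" using c0 assms by (simp add: z_def)
  define s where "s = csqrt (z - 1) * csqrt (z + 1)"
  have ss: "s * s = z * z - 1"
  proof -
    have "s * s = (csqrt (z - 1))\<^sup>2 * (csqrt (z + 1))\<^sup>2" by (simp add: s_def power2_eq_square algebra_simps)
    also have "\<dots> = (z - 1) * (z + 1)" by simp
    finally show ?thesis by (simp add: algebra_simps)
  qed
  have ph: "phi z = z + s" by (simp add: phi_def s_def)
  have "phi z * (z - s) = 1" unfolding ph using ss by (simp add: algebra_simps)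
  then have p0: "phi z \<noteq> 0" by auto
  have den: "1 + (phi z)\<^sup>2 = 2 * z * phi z"
    unfolding ph using ss by (simp add: algebra_simps power2_eq_square)
  have "complex_of_real (root 4 12) * x = 2 * z" by (simp add: r12 z_def)
  then have "complex_of_real (root 4 12) * (x * phi z / (1 + (phi z)\<^sup>2)) = 2 * z * phi z / (2 * z * phi z)"
    unfolding den by (metis mult.assoc times_divide_eq_right)
  also have "\<dots> = 1" using z0 p0 by simp
  finally show ?thesis by (simp add: z_def c_def)
qed

lemma root4_sq: "(root 4 (real n))\<^sup>2 = sqrt (real n)"
proof -
  have "root 4 (real n) = root 2 (root 2 (real n))" using real_root_mult_exp[of 2 2] by simp
  then show ?thesis by (simp add: sqrt_def)
qed

lemma a_sq: "4 * (1 / sqrt 12) \<le> (root 4 (4/3))\<^sup>2"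
proof -
  have "(root 4 (4/3))\<^sup>2 = (root 2 (root 2 (4/3)))\<^sup>2" using real_root_mult_exp[of 2 2 "4/3"] by simp
  also have "\<dots> = sqrt (4/3)" by (simp add: sqrt_def[symmetric])
  also have "sqrt (4/3) = 4 * (1 / sqrt 12)"
  proof -
    have "sqrt 12 = sqrt (4/3 * 9)" by simp
    also have "\<dots> = sqrt (4/3) * sqrt 9" by (rule real_sqrt_mult)
    also have "sqrt 9 = 3" by (rule real_sqrt_unique) simp_all
    finally have "sqrt 12 = sqrt (4/3) * 3" .
    moreover have "sqrt (4/3) * sqrt (4/3) = 4/3" by simp
    ultimately show ?thesis by (simp add: field_simps)
  qed
  finally show ?thesis by simp
qed

lemma geo_sep:
  fixes x :: complex
  assumes a: "a > 0" and d: "d > 0"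
    and far: "\<And>t. t \<in> {-a..a} \<Longrightarrow> d \<le> dist x (complex_of_real t)"
  shows "\<bar>Im x\<bar> \<ge> d / 2 \<or> cmod x \<ge> a + d / 2"
proof (rule ccontr)
  assume "\<not> ?thesis"
  then have im: "\<bar>Im x\<bar> < d / 2" and md: "cmod x < a + d / 2" by auto
  have dle: "dist x (complex_of_real t) \<le> \<bar>Re x - t\<bar> + \<bar>Im x\<bar>" for t
    using cmod_le[of "x - complex_of_real t"] by (simp add: dist_norm)
  show False
  proof (cases "\<bar>Re x\<bar> \<le> a")
    case True
    then have "d \<le> dist x (complex_of_real (Re x))" using far[of "Re x"] by (simp add: abs_le_iff)
    with dle[of "Re x"] im show False by simp
  next
    case False
    define t where "t = (if Re x > 0 then a else - a)"
    have t: "t \<in> {-a..a}" using a by (auto simp: t_def)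
    have "\<bar>Re x - t\<bar> = \<bar>Re x\<bar> - a" using False a by (auto simp: t_def)
    moreover have "\<bar>Re x\<bar> \<le> cmod x" by (rule abs_Re_le_cmod)
    ultimately have "dist x (complex_of_real t) < d" using dle[of t] im md by simp
    with far[OF t] show False by simp
  qed
qed

lemma ratio_alg:
  fixes P Q E :: complex
  assumes "P \<noteq> 0" "cmod E \<le> 1/2" "Q = P * (1 + E)"
  shows "cmod (P / Q - 1) \<le> 2 * cmod E"
proof -
  have "cmod (1 + E) \<ge> 1 - cmod E" using norm_triangle_ineq2[of 1 "- E"] by simp
  then have ge: "cmod (1 + E) \<ge> 1/2" using assms(2) by simp
  then have e0: "1 + E \<noteq> 0" by auto
  have "Q \<noteq> 0" using assms(1,3) e0 by simp
  then have "P / Q - 1 = - E / (1 + E)" using assms(1,3) e0 by (simp add: field_simps)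
  then have "cmod (P / Q - 1) = cmod E / cmod (1 + E)" by (simp add: norm_divide)
  also have "\<dots> \<le> cmod E / (1/2)" using ge by (intro divide_left_mono) auto
  finally show ?thesis by simp
qed




lemma cmap_diff: "map_poly complex_of_real (p - q) = map_poly complex_of_real p - map_poly complex_of_real q"
  by (intro poly_eqI) (simp add: coeff_map_poly)
lemma cmap_add: "map_poly complex_of_real (p + q) = map_poly complex_of_real p + map_poly complex_of_real q"
  by (intro poly_eqI) (simp add: coeff_map_poly)
lemma cmap_smult: "map_poly complex_of_real (smult c p) = smult (complex_of_real c) (map_poly complex_of_real p)"
  by (intro poly_eqI) (simp add: coeff_map_poly)
lemma cmap_pCons: "map_poly complex_of_real (pCons c p) = pCons (complex_of_real c) (map_poly complex_of_real p)"
  by (rule map_poly_pCons) simp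

lemma ip_sym: "freud_ip f g = freud_ip g f"
  by (simp add: freud_ip_LF mult.commute)

lemma ip_pos: "p \<noteq> 0 \<Longrightarrow> freud_ip p p > 0"
  by (simp add: freud_ip_LF LF_pos)

lemma ip_diff: "freud_ip (A - B) q = freud_ip A q - freud_ip B q"
  by (simp add: freud_ip_LF left_diff_distrib LF_diff)

lemma ip_add: "freud_ip (A + B) q = freud_ip A q + freud_ip B q"
  by (simp add: freud_ip_LF distrib_right LF_add)

lemma ip_smult: "freud_ip (smult c A) q = c * freud_ip A q"
  by (simp add: freud_ip_LF LF_smult)

lemma lowdeg: assumes "degree (q::'a::zero poly) \<le> n" "coeff q n = 0" shows "q = 0 \<or> degree q < n"
proof (rule ccontr)
  assume a: "\<not> (q = 0 \<or> degree q < n)"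
  then have "degree q = n" using assms(1) by auto
  with assms(2) have "lead_coeff q = 0" by simp
  then have "q = 0" by simp
  with a show False by simp
qed

lemma ip_diff2: "freud_ip q (A - B) = freud_ip q A - freud_ip q B"
  by (simp add: freud_ip_LF right_diff_distrib LF_diff)

lemma ip_smult2: "freud_ip q (smult c A) = c * freud_ip q A"
  by (simp add: freud_ip_LF LF_smult)

lemma monic_unique:
  fixes ip :: "real poly \<Rightarrow> real poly \<Rightarrow> real"
  assumes lin: "\<And>A B q. ip (A - B) q = ip A q - ip B q"
    and pos: "\<And>D. D \<noteq> 0 \<Longrightarrow> ip D D > 0"
    and A: "degree A = n" "lead_coeff A = 1" "\<forall>q. degree q < n \<longrightarrow> ip A q = 0"
    and B: "degree B = n" "lead_coeff B = 1" "\<forall>q. degree q < n \<longrightarrow> ip B q = 0"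
  shows "A = B"
proof (rule ccontr)
  assume ne: "A \<noteq> B"
  let ?D = "A - B"
  have "degree ?D \<le> n" by (rule degree_diff_le) (simp_all add: A B)
  moreover have "coeff ?D n = 0" using A B by simp
  ultimately have "?D = 0 \<or> degree ?D < n" by (rule lowdeg)
  with ne have d: "degree ?D < n" by auto
  have "ip ?D ?D = 0" using lin A(3) B(3) d by simp
  with pos[of ?D] ne show False by simp
qed

context
  fixes P :: "nat \<Rightarrow> real poly"
  assumes MP: "monic_orthogonal_sequence freud_ip P"
begin

lemma P_deg: "degree (P n) = n" using MP unfolding monic_orthogonal_sequence_def by blast
lemma P_lead: "lead_coeff (P n) = 1" using MP unfolding monic_orthogonal_sequence_def by blast
lemma P_orth: "degree q < n \<Longrightarrow> freud_ip (P n) q = 0" using MP unfolding monic_orthogonal_sequence_def by blast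
lemma P_nz: "P n \<noteq> 0" using P_lead[of n] by auto

lemma P_orth0: "q = 0 \<or> degree q < n \<Longrightarrow> freud_ip (P n) q = 0"
  using P_orth by (auto simp: freud_ip_LF)

lemma P_coeff_n: "coeff (P n) n = 1" using P_lead[of n] by (simp add: P_deg)

definition hh :: "nat \<Rightarrow> real" where "hh n = freud_ip (P n) (P n)"

lemma hh_pos: "hh n > 0" unfolding hh_def by (rule ip_pos[OF P_nz])

lemma P_coeff: assumes "degree q \<le> n" shows "freud_ip (P n) q = coeff q n * hh n"
proof -
  let ?D = "q - smult (coeff q n) (P n)"
  have "degree ?D \<le> n" using assms P_deg[of n]
    by (metis degree_diff_le degree_smult_le order.trans)
  moreover have "coeff ?D n = 0" using P_lead[of n] P_deg[of n] by simp
  ultimately have "?D = 0 \<or> degree ?D < n" by (rule lowdeg)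
  then have "freud_ip (P n) ?D = 0" by (rule P_orth0)
  moreover have "freud_ip (P n) ?D = freud_ip (P n) q - coeff q n * hh n"
    by (simp add: ip_diff2 ip_smult2 hh_def)
  ultimately show ?thesis by simp
qed

lemma P_ortho_ne: "m \<noteq> n \<Longrightarrow> freud_ip (P m) (P n) = 0"
proof (cases "m < n")
  case True
  have "freud_ip (P m) (P n) = freud_ip (P n) (P m)" by (rule ip_sym)
  also have "\<dots> = 0" by (rule P_orth) (simp add: P_deg True)
  finally show ?thesis .
next
  case False
  assume "m \<noteq> n"
  with False have "n < m" by simp
  then show ?thesis using P_orth[of "P n" m] P_deg by simp
qed

lemma P0: "P 0 = 1"
proof -
  have "degree (P 0) = 0" by (rule P_deg)
  then obtain c where "P 0 = [:c:]" by (metis degree_eq_zeroE)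
  with P_lead[of 0] show ?thesis by (simp add: one_pCons)
qed

lemma refl_refl: "pcompose [:0, -1:] [:0, -1::real:] = [:0, 1:]"
  by (simp add: pcompose_pCons)

lemma P_parity: "pcompose (P n) [:0,-1:] = smult ((-1)^n) (P n)"
proof -
  let ?r = "[:0,-1::real:]"
  let ?R = "smult ((-1)^n) (pcompose (P n) ?r)"
  have degR: "degree ?R = n" by (simp add: degree_pcompose P_deg)
  have "lead_coeff (pcompose (P n) ?r) = (-1)^n"
    by (subst lead_coeff_comp) (simp_all add: P_coeff_n P_deg)
  then have leadR: "lead_coeff ?R = 1"
    using P_lead[of n] by (simp add: degree_pcompose P_deg power_mult_distrib[symmetric])
  have orthR: "\<forall>q. degree q < n \<longrightarrow> freud_ip ?R q = 0"
  proof (intro allI impI)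
    fix q :: "real poly" assume q: "degree q < n"
    have "pcompose (P n * pcompose q ?r) ?r = pcompose (P n) ?r * q"
      by (simp add: pcompose_mult pcompose_assoc[symmetric] refl_refl)
    then have "LF (pcompose (P n) ?r * q) = LF (P n * pcompose q ?r)"
      by (metis LF_refl)
    also have "\<dots> = freud_ip (P n) (pcompose q ?r)" by (simp add: freud_ip_LF)
    also have "\<dots> = 0" by (rule P_orth) (simp add: degree_pcompose q)
    finally show "freud_ip ?R q = 0" by (simp add: freud_ip_LF LF_smult)
  qed
  have "?R = P n"
    by (rule monic_unique[OF ip_diff _ degR leadR orthR P_deg P_lead]) (auto intro: ip_pos P_orth)
  then have "smult ((-1)^n) ?R = smult ((-1)^n) (P n)" by simp
  then show ?thesis by (simp add: power_mult_distrib[symmetric])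
qed

lemma poly_P_neg: "poly (P n) (-x) = (-1)^n * poly (P n) x"
  using arg_cong[OF P_parity[of n], of "\<lambda>p. poly p x"] by (simp add: poly_pcompose)

lemma LF_odd: assumes "\<And>x. poly Y (-x) = - poly Y x" shows "LF Y = 0"
proof -
  have "poly (pcompose Y [:0,-1:]) = poly (- Y)"
    by (auto simp: poly_pcompose assms)
  then have "pcompose Y [:0,-1:] = - Y" by (simp add: poly_eq_poly_eq_iff)
  then have "LF Y = LF (- Y)" by (metis LF_refl)
  then show ?thesis by (simp add: LF_minus)
qed

lemma pCons0_mult: "pCons 0 A * B = A * pCons 0 (B :: real poly)"
  by (simp add: mult_pCons_left mult_pCons_right mult.commute)

lemma ip_pCons0: "freud_ip (pCons 0 A) B = freud_ip A (pCons 0 B)"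
  by (simp add: freud_ip_LF pCons0_mult)

lemma LF_xPP: "LF (pCons 0 (P n * P n)) = 0"
proof (rule LF_odd)
  fix x :: real
  have "((-1::real)^n) * ((-1)^n) = 1" by (simp add: power_mult_distrib[symmetric])
  moreover have "((-1::real)^n * a) * ((-1)^n * a) = ((-1)^n * (-1)^n) * (a * a)" for a
    by (simp add: mult_ac)
  ultimately have e: "poly (P n) (-x) * poly (P n) (-x) = poly (P n) x * poly (P n) x"
    unfolding poly_P_neg by simp
  show "poly (pCons 0 (P n * P n)) (-x) = - poly (pCons 0 (P n * P n)) x"
    by (simp add: e)
qed

definition bb :: "nat \<Rightarrow> real" where "bb n = (if n = 0 then 0 else hh n / hh (n - 1))"

lemma bb_pos: "n > 0 \<Longrightarrow> bb n > 0" by (simp add: bb_def hh_pos)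

lemma degree_pCons0_le: "degree q < m \<Longrightarrow> degree (pCons 0 q) \<le> m"
  by (cases "q = 0") auto

lemma P_rec: "pCons 0 (P n) = P (Suc n) + smult (bb n) (P (n - 1))"
proof -
  let ?D = "pCons 0 (P n) - P (Suc n)"
  have d1: "degree ?D \<le> Suc n"
    by (rule degree_diff_le) (simp_all add: P_deg P_nz)
  have "coeff ?D (Suc n) = 0" using P_lead[of n] P_lead[of "Suc n"] by (simp add: P_deg)
  with d1 have "?D = 0 \<or> degree ?D < Suc n" by (rule lowdeg)
  then have dD: "degree ?D \<le> n" by auto
  have "freud_ip (P n) ?D = freud_ip (P n) (pCons 0 (P n)) - freud_ip (P n) (P (Suc n))"
    by (rule ip_diff2)
  also have "\<dots> = 0" using LF_xPP[of n] P_ortho_ne[of n "Suc n"]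
    by (simp add: freud_ip_LF)
  finally have "coeff ?D n * hh n = 0" using P_coeff[OF dD] by simp
  then have cDn: "coeff ?D n = 0" using hh_pos[of n] by simp
  show ?thesis
  proof (cases n)
    case 0
    with dD cDn have "?D = 0" using lowdeg[OF dD cDn] by auto
    then show ?thesis using 0 by (simp add: bb_def)
  next
    case (Suc m)
    from lowdeg[OF dD cDn] have dDm: "degree ?D \<le> m" using Suc by auto
    have "freud_ip (P m) ?D = freud_ip (P m) (pCons 0 (P n)) - freud_ip (P m) (P (Suc n))"
      by (rule ip_diff2)
    also have "\<dots> = freud_ip (P n) (pCons 0 (P m))"
    proof -
      have "freud_ip (P m) (pCons 0 (P n)) = freud_ip (pCons 0 (P m)) (P n)"
        by (rule ip_pCons0[symmetric])
      also have "\<dots> = freud_ip (P n) (pCons 0 (P m))" by (rule ip_sym)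
      finally show ?thesis using P_ortho_ne[of m "Suc n"] Suc by simp
    qed
    also have "\<dots> = coeff (pCons 0 (P m)) n * hh n"
      by (rule P_coeff) (simp add: Suc P_deg P_nz)
    also have "\<dots> = hh n" using Suc P_lead[of m] by (simp add: P_deg)
    finally have "coeff ?D m * hh m = hh n" using P_coeff[OF dDm] by simp
    then have cDm: "coeff ?D m = bb n" using hh_pos[of m] Suc by (simp add: bb_def field_simps)
    let ?E = "?D - smult (bb n) (P m)"
    have dE: "degree ?E \<le> m"
      by (rule degree_diff_le) (simp_all add: dDm P_deg)
    have "coeff ?E m = 0" using cDm P_lead[of m] by (simp add: P_deg)
    from lowdeg[OF dE this] have E: "?E = 0 \<or> degree ?E < m" .
    have orthE: "freud_ip ?E q = 0" if "degree q < m" for q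
    proof -
      have "freud_ip ?D q = freud_ip (P n) (pCons 0 q) - freud_ip (P (Suc n)) q"
        by (simp add: ip_diff ip_pCons0)
      also have "\<dots> = 0"
        using P_orth[of "pCons 0 q" n] P_orth[of q "Suc n"] that Suc degree_pCons0_le[OF that]
        by simp
      finally show ?thesis using P_orth[OF that] by (simp add: ip_diff ip_smult)
    qed
    have "?E = 0"
    proof (rule ccontr)
      assume ne: "?E \<noteq> 0"
      with E have "degree ?E < m" by auto
      then have "freud_ip ?E ?E = 0" by (rule orthE)
      with ip_pos[OF ne] show False by simp
    qed
    then show ?thesis using Suc by (simp add: algebra_simps)
  qed
qed


lemma hh_Suc: "hh (Suc n) = bb (Suc n) * hh n"
  using hh_pos[of n] by (simp add: bb_def)

lemma ip_add2: "freud_ip q (A + B) = freud_ip q A + freud_ip q B"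
  by (simp add: freud_ip_LF distrib_left LF_add)

lemma ip_xP_xP: "freud_ip (pCons 0 (P n)) (pCons 0 (P n)) = hh n * (bb (Suc n) + bb n)"
proof -
  have "freud_ip (pCons 0 (P n)) (pCons 0 (P n)) =
      freud_ip (P (Suc n) + smult (bb n) (P (n - 1))) (P (Suc n) + smult (bb n) (P (n - 1)))"
    by (simp only: P_rec)
  also have "\<dots> = hh (Suc n) + bb n * bb n * hh (n - 1)"
    using P_ortho_ne[of "Suc n" "n - 1"] P_ortho_ne[of "n - 1" "Suc n"]
    by (simp add: ip_add ip_add2 ip_smult ip_smult2 hh_def)
  also have "\<dots> = hh n * (bb (Suc n) + bb n)"
  proof (cases n)
    case 0 then show ?thesis using hh_Suc[of 0] by (simp add: bb_def[of 0])
  next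
    case (Suc m)
    then have "bb n * hh (n - 1) = hh n" using hh_pos[of m] by (simp add: bb_def)
    then show ?thesis by (simp add: hh_Suc algebra_simps)
  qed
  finally show ?thesis .
qed

lemma string_eq: assumes "n \<ge> 1" shows "4 * bb n * (bb (n - 1) + bb n + bb (Suc n)) = real n"
proof -
  obtain m where n: "n = Suc m" using assms by (cases n) auto
  have a: "freud_ip (P m) (pderiv (P n)) = real n * hh m"
  proof -
    have "degree (pderiv (P n)) \<le> m" by (simp add: degree_pderiv P_deg n)
    then have "freud_ip (P m) (pderiv (P n)) = coeff (pderiv (P n)) m * hh m" by (rule P_coeff)
    also have "coeff (pderiv (P n)) m = real n" using P_coeff_n[of n] by (simp add: coeff_pderiv n)
    finally show ?thesis .
  qed
  have b0: "freud_ip (P n) (pderiv (P m)) = 0"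
    by (rule P_orth0) (cases m, auto simp: degree_pderiv P_deg n)
  have b: "LF (P m * pderiv (P n)) = LF (monom 4 3 * (P n * P m))"
  proof -
    have "LF (monom 4 3 * (P n * P m)) = LF (pderiv (P n * P m))" by (rule LF_deriv[symmetric])
    also have "\<dots> = LF (P n * pderiv (P m)) + LF (P m * pderiv (P n))"
      by (simp add: pderiv_mult LF_add)
    finally show ?thesis using b0 by (simp add: freud_ip_LF)
  qed
  have c: "monom 4 3 * (P n * P m) = smult 4 (pCons 0 (P n) * pCons 0 (pCons 0 (P m)))"
  proof -
    have "poly (monom 4 3 * (P n * P m)) = poly (smult 4 (pCons 0 (P n) * pCons 0 (pCons 0 (P m))))"
      by (auto simp: poly_monom fun_eq_iff power3_eq_cube)
    then show ?thesis by (simp add: poly_eq_poly_eq_iff)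
  qed
  have d1: "pCons 0 (pCons 0 (P m)) = pCons 0 (P n) + smult (bb m) (pCons 0 (P (m - 1)))"
  proof -
    have h: "pCons 0 (P m) = P n + smult (bb m) (P (m - 1))" using P_rec[of m] n by simp
    show ?thesis by (simp add: h)
  qed
  have d2: "bb m * freud_ip (pCons 0 (P n)) (pCons 0 (P (m - 1))) = bb m * hh n"
  proof (cases m)
    case 0 then show ?thesis by (simp add: bb_def)
  next
    case (Suc k)
    have "freud_ip (pCons 0 (P n)) (pCons 0 (P (m - 1))) = freud_ip (P n) (pCons 0 (pCons 0 (P k)))"
      by (simp add: ip_pCons0 Suc)
    also have "\<dots> = coeff (pCons 0 (pCons 0 (P k))) n * hh n"
      by (rule P_coeff) (simp add: P_deg P_nz n Suc)
    also have "\<dots> = hh n" using P_coeff_n[of k] by (simp add: n Suc)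
    finally show ?thesis by simp
  qed
  have "LF (pCons 0 (P n) * pCons 0 (pCons 0 (P m))) = freud_ip (pCons 0 (P n)) (pCons 0 (pCons 0 (P m)))"
    by (simp add: freud_ip_LF)
  also have "\<dots> = hh n * (bb (Suc n) + bb n) + bb m * hh n"
    unfolding d1 ip_add2 ip_smult2 ip_xP_xP d2 ..
  finally have e: "LF (pCons 0 (P n) * pCons 0 (pCons 0 (P m))) = hh n * (bb (Suc n) + bb n + bb m)"
    by (simp add: algebra_simps)
  have "real n * hh m = LF (P m * pderiv (P n))" using a by (simp add: freud_ip_LF)
  also have "\<dots> = LF (monom 4 3 * (P n * P m))" by (rule b)
  also have "\<dots> = LF (smult 4 (pCons 0 (P n) * pCons 0 (pCons 0 (P m))))" unfolding c ..
  also have "\<dots> = 4 * LF (pCons 0 (P n) * pCons 0 (pCons 0 (P m)))" by (rule LF_smult)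
  also have "\<dots> = 4 * (hh n * (bb (Suc n) + bb n + bb m))" unfolding e ..
  also have "hh n = bb n * hh m" using hh_Suc[of m] n by simp
  finally have f: "real n * hh m = 4 * (bb n * hh m * (bb (Suc n) + bb n + bb m))" .
  have "(real n - 4 * bb n * (bb (Suc n) + bb n + bb m)) * hh m = 0"
    using f by (simp add: algebra_simps)
  then have "real n = 4 * bb n * (bb (Suc n) + bb n + bb m)" using hh_pos[of m] by simp
  then show ?thesis using n by (simp add: ac_simps)
qed

lemma bb_nonneg: "bb n \<ge> 0" by (cases "n = 0") (auto simp: bb_def hh_pos less_imp_le)

lemma bb_bound: "bb n \<le> sqrt (real n) / 2"
proof (cases "n = 0")
  case True then show ?thesis by (simp add: bb_def)
next
  case False
  then have "4 * bb n * (bb (n - 1) + bb n + bb (Suc n)) = real n" by (intro string_eq) simp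
  moreover have "4 * bb n * bb n \<le> 4 * bb n * (bb (n - 1) + bb n + bb (Suc n))"
    using bb_nonneg[of n] bb_nonneg[of "n - 1"] bb_nonneg[of "Suc n"]
    by (intro mult_left_mono) auto
  ultimately have "(2 * bb n)\<^sup>2 \<le> real n" by (simp add: power2_eq_square)
  then have "2 * bb n \<le> sqrt (real n)" using bb_nonneg[of n] real_le_rsqrt by blast
  then show ?thesis by simp
qed

lemma P_at0_odd: "odd n \<Longrightarrow> poly (P n) 0 = 0"
  using poly_P_neg[of n 0] by simp

lemma P_at0_rec: "poly (P (Suc (Suc n))) 0 = - bb (Suc n) * poly (P n) 0"
  using arg_cong[OF P_rec[of "Suc n"], of "\<lambda>p. poly p 0"] by simp

lemma P_at0_even: "even n \<Longrightarrow> poly (P n) 0 \<noteq> 0"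
proof (induction n rule: nat_less_induct)
  case (1 n)
  show ?case
  proof (cases n)
    case 0 then show ?thesis by (simp add: P0)
  next
    case (Suc m)
    with 1(2) obtain k where k: "n = Suc (Suc k)" by (cases m) auto
    with 1 have "poly (P k) 0 \<noteq> 0" by auto
    then show ?thesis using k bb_pos[of "Suc k"] by (simp add: P_at0_rec)
  qed
qed

lemma P_rec_poly: "poly (map_poly complex_of_real (P (Suc (Suc k)))) y
   = y * poly (map_poly complex_of_real (P (Suc k))) y - complex_of_real (bb (Suc k)) * poly (map_poly complex_of_real (P k)) y"
proof -
  have "P (Suc (Suc k)) = pCons 0 (P (Suc k)) - smult (bb (Suc k)) (P k)"
    using P_rec[of "Suc k"] by simp
  then show ?thesis by (simp add: cmap_diff cmap_smult cmap_pCons)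
qed

lemma P1: "P (Suc 0) = pCons 0 1"
  using P_rec[of 0] by (simp add: bb_def P0)

definition SS :: "nat \<Rightarrow> real poly" where "SS k = synthetic_div (P (Suc k)) 0"
definition UU :: "nat \<Rightarrow> real" where "UU k = (poly (P k) 0)\<^sup>2 / hh k"
definition TT :: "nat \<Rightarrow> real" where "TT k = poly (SS k) 0 * poly (P k) 0 / hh k"

lemma pCons_synth0: "p = pCons (poly p 0) (synthetic_div p (0::real))"
  using synthetic_div_correct[of p 0] by simp

lemma P_SS: "even k \<Longrightarrow> P (Suc k) = pCons 0 (SS k)"
  using pCons_synth0[of "P (Suc k)"] P_at0_odd[of "Suc k"] by (simp add: SS_def)

lemma SS_deg: "degree (SS k) = k" by (simp add: SS_def degree_synthetic_div P_deg)

lemma SS_lead: "even k \<Longrightarrow> coeff (SS k) k = 1"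
  using P_coeff_n[of "Suc k"] P_SS[of k] by simp

lemma LF_SS: assumes "even k" shows "LF (SS k) = hh k / poly (P k) 0"
proof -
  let ?W = "synthetic_div (P k) 0"
  have "freud_ip (P k) (SS k) = hh k" using P_coeff[of "SS k" k] SS_deg SS_lead[OF assms] by simp
  moreover have "freud_ip (P k) (SS k) = poly (P k) 0 * LF (SS k) + freud_ip (P (Suc k)) ?W"
  proof -
    have "freud_ip (P k) (SS k) = LF (SS k * pCons (poly (P k) 0) ?W)"
      by (subst pCons_synth0[of "P k"]) (simp add: freud_ip_LF mult.commute)
    also have "\<dots> = LF (smult (poly (P k) 0) (SS k) + pCons 0 (SS k) * ?W)"
      by (simp add: mult_pCons_right)
    also have "\<dots> = poly (P k) 0 * LF (SS k) + freud_ip (P (Suc k)) ?W"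
      by (simp add: LF_add LF_smult freud_ip_LF P_SS[OF assms])
    finally show ?thesis .
  qed
  moreover have "freud_ip (P (Suc k)) ?W = 0"
    by (rule P_orth0) (cases k, auto simp: degree_synthetic_div P_deg)
  ultimately have "hh k = poly (P k) 0 * LF (SS k)" by simp
  then show ?thesis using P_at0_even[OF assms] by (simp add: field_simps)
qed

lemma SS_rec: assumes "even k" shows "SS (Suc (Suc k)) = P (Suc (Suc k)) - smult (bb (Suc (Suc k))) (SS k)"
proof -
  have "pCons 0 (SS (Suc (Suc k))) = P (Suc (Suc (Suc k)))" using P_SS[of "Suc (Suc k)"] assms by simp
  also have "\<dots> = pCons 0 (P (Suc (Suc k))) - smult (bb (Suc (Suc k))) (P (Suc k))"
    using P_rec[of "Suc (Suc k)"] by simp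
  also have "\<dots> = pCons 0 (P (Suc (Suc k)) - smult (bb (Suc (Suc k))) (SS k))"
    using P_SS[OF assms] by simp
  finally show ?thesis by simp
qed

lemma UU_pos: "even k \<Longrightarrow> UU k > 0"
  using P_at0_even[of k] hh_pos[of k] by (simp add: UU_def)

lemma hh_Suc2: "hh (Suc (Suc k)) = bb (Suc (Suc k)) * bb (Suc k) * hh k"
  using hh_Suc[of "Suc k"] hh_Suc[of k] by simp

lemma UU_rec: assumes "even k" shows "UU (Suc (Suc k)) = UU k * bb (Suc k) / bb (Suc (Suc k))"
proof -
  have "UU (Suc (Suc k)) = (bb (Suc k))\<^sup>2 * (poly (P k) 0)\<^sup>2 / (bb (Suc (Suc k)) * bb (Suc k) * hh k)"
    unfolding UU_def hh_Suc2 P_at0_rec by (simp add: power_mult_distrib)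
  also have "\<dots> = UU k * bb (Suc k) / bb (Suc (Suc k))"
    using bb_pos[of "Suc k"] bb_pos[of "Suc (Suc k)"] hh_pos[of k] by (simp add: UU_def field_simps power2_eq_square)
  finally show ?thesis .
qed

lemma TT_0: "TT 0 = UU 0"
proof -
  have "SS 0 = 1" using P1 P_SS[of 0] by simp
  then show ?thesis by (simp add: TT_def UU_def P0)
qed

lemma TT_rec: assumes "even k" shows "TT (Suc (Suc k)) = UU (Suc (Suc k)) + TT k"
proof -
  let ?a = "poly (P k) 0" and ?b1 = "bb (Suc k)" and ?b2 = "bb (Suc (Suc k))"
  have "TT (Suc (Suc k)) = (poly (P (Suc (Suc k))) 0 - ?b2 * poly (SS k) 0) * poly (P (Suc (Suc k))) 0 / hh (Suc (Suc k))"
    by (simp add: TT_def SS_rec[OF assms])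
  also have "\<dots> = UU (Suc (Suc k)) + ?b2 * poly (SS k) 0 * ?b1 * ?a / (?b2 * ?b1 * hh k)"
    unfolding UU_def hh_Suc2 P_at0_rec using bb_pos[of "Suc k"] bb_pos[of "Suc (Suc k)"] hh_pos[of k]
    by (simp add: field_simps power2_eq_square)
  also have "\<dots> = UU (Suc (Suc k)) + TT k"
    using bb_pos[of "Suc k"] bb_pos[of "Suc (Suc k)"] by (simp add: TT_def)
  finally show ?thesis .
qed

lemma TT_sum: "TT (2 * j) = (\<Sum>i\<le>j. UU (2 * i))"
proof (induction j)
  case 0 then show ?case by (simp add: TT_0)
next
  case (Suc j)
  have "TT (2 * Suc j) = TT (Suc (Suc (2 * j)))" by simp
  also have "\<dots> = UU (Suc (Suc (2 * j))) + TT (2 * j)" by (rule TT_rec) simp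
  finally show ?case using Suc by simp
qed

lemma TT_pos: "even k \<Longrightarrow> TT k > 0"
proof -
  assume "even k"
  then obtain j where k: "k = 2 * j" by (elim evenE)
  have "(\<Sum>i\<le>j. UU (2 * i)) > 0" by (intro sum_pos UU_pos) auto
  then show ?thesis using k TT_sum by simp
qed


lemma sob_diff: "sob_ip lam (A - B) q = sob_ip lam A q - sob_ip lam B q"
  by (simp add: sob_ip_def ip_diff algebra_simps)

lemma sob_pos: "lam \<ge> 0 \<Longrightarrow> D \<noteq> 0 \<Longrightarrow> sob_ip lam D D > 0"
  unfolding sob_ip_def using ip_pos[of D]
  by (metis add_pos_nonneg mult_nonneg_nonneg mult.assoc zero_le_square)

context
  fixes Q :: "nat \<Rightarrow> real poly" and lam :: real
  assumes MQ: "monic_orthogonal_sequence (sob_ip lam) Q" and lam: "lam \<ge> 0"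
begin

lemma Q_deg: "degree (Q n) = n" using MQ unfolding monic_orthogonal_sequence_def by blast
lemma Q_lead: "lead_coeff (Q n) = 1" using MQ unfolding monic_orthogonal_sequence_def by blast
lemma Q_orth: "\<forall>q. degree q < n \<longrightarrow> sob_ip lam (Q n) q = 0" using MQ unfolding monic_orthogonal_sequence_def by blast

lemma Q_unique: assumes "degree R = n" "lead_coeff R = 1" "\<forall>q. degree q < n \<longrightarrow> sob_ip lam R q = 0"
  shows "Q n = R"
  by (rule monic_unique[OF sob_diff _ Q_deg Q_lead Q_orth assms]) (rule sob_pos[OF lam])

lemma Q_odd: "odd n \<Longrightarrow> Q n = P n"
  by (rule Q_unique) (auto simp: P_deg P_coeff_n sob_ip_def P_orth P_at0_odd)

lemma Q_0: "Q 0 = P 0"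
  by (rule Q_unique) (auto simp: P_deg P_coeff_n)

definition dd :: "nat \<Rightarrow> real" where "dd k = lam * bb (Suc k) * UU k / (1 + lam * TT k)"

lemma Q_even: assumes "even k" shows "Q (Suc (Suc k)) = P (Suc (Suc k)) + smult (dd k) (SS k)"
proof (rule Q_unique)
  let ?R = "P (Suc (Suc k)) + smult (dd k) (SS k)"
  have dR: "degree ?R = Suc (Suc k)"
    by (metis P_deg SS_deg degree_add_eq_left degree_smult_le le_less_trans lessI less_SucI)
  then show "degree ?R = Suc (Suc k)" .
  show "lead_coeff ?R = 1" using dR P_coeff_n[of "Suc (Suc k)"] SS_deg[of k] by (simp add: coeff_eq_0)
  show "\<forall>q. degree q < Suc (Suc k) \<longrightarrow> sob_ip lam ?R q = 0"
  proof (intro allI impI)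
    fix q :: "real poly" assume q: "degree q < Suc (Suc k)"
    let ?V = "synthetic_div q 0" and ?a = "poly (P k) 0"
    have a0: "?a \<noteq> 0" by (rule P_at0_even[OF assms])
    have "LF (SS k * q) = LF (SS k * pCons (poly q 0) ?V)" by (subst pCons_synth0[of q]) simp
    also have "\<dots> = poly q 0 * LF (SS k) + freud_ip (P (Suc k)) ?V"
      by (simp add: mult_pCons_right LF_add LF_smult freud_ip_LF P_SS[OF assms])
    also have "freud_ip (P (Suc k)) ?V = 0"
      by (rule P_orth0) (use q in \<open>auto simp: degree_synthetic_div\<close>)
    finally have SSq: "LF (SS k * q) = poly q 0 * LF (SS k)" by simp
    have Rq: "freud_ip ?R q = dd k * (poly q 0 * LF (SS k))"
    proof -
      have "freud_ip ?R q = freud_ip (P (Suc (Suc k))) q + dd k * freud_ip (SS k) q"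
        by (simp only: ip_add ip_smult)
      then show ?thesis using P_orth[OF q] SSq by (simp add: freud_ip_LF)
    qed
    have TT: "TT k * hh k / ?a = poly (SS k) 0" using a0 hh_pos[of k] by (simp add: TT_def)
    have key: "dd k * (LF (SS k) + lam * poly (SS k) 0) + lam * poly (P (Suc (Suc k))) 0 = 0"
    proof -
      have eq: "LF (SS k) + lam * poly (SS k) 0 = hh k * (1 + lam * TT k) / ?a"
        using a0 unfolding LF_SS[OF assms] TT[symmetric] by (simp add: field_simps)
      have "1 + lam * TT k > 0" using TT_pos[OF assms] lam by (simp add: add_pos_nonneg)
      then have dd1: "dd k * (1 + lam * TT k) = lam * bb (Suc k) * UU k" by (simp add: dd_def)
      have "dd k * (LF (SS k) + lam * poly (SS k) 0) = (dd k * (1 + lam * TT k)) * hh k / ?a"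
        unfolding eq by simp
      also have "\<dots> = lam * bb (Suc k) * UU k * hh k / ?a" unfolding dd1 ..
      finally have "dd k * (LF (SS k) + lam * poly (SS k) 0) = lam * bb (Suc k) * UU k * hh k / ?a" .
      also have "\<dots> = lam * bb (Suc k) * ?a"
        using a0 hh_pos[of k] by (simp add: UU_def field_simps power2_eq_square)
      finally show ?thesis by (simp add: P_at0_rec)
    qed
    have "sob_ip lam ?R q = poly q 0 * (dd k * (LF (SS k) + lam * poly (SS k) 0) + lam * poly (P (Suc (Suc k))) 0)"
      unfolding sob_ip_def Rq by (simp add: algebra_simps)
    then show "sob_ip lam ?R q = 0" using key by simp
  qed
qed

lemma dd_nonneg: "even k \<Longrightarrow> dd k \<ge> 0"
  using lam bb_nonneg[of "Suc k"] UU_pos[of k] TT_pos[of k]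
  by (simp add: dd_def add_pos_nonneg less_imp_le)

lemma dd_bound: assumes "even k" shows "dd k \<le> bb (Suc k) * (UU k / TT k)"
proof -
  have T: "TT k > 0" and U: "UU k > 0" using TT_pos[OF assms] UU_pos[OF assms] by auto
  have "lam * UU k / (1 + lam * TT k) \<le> UU k / TT k"
    using T U lam by (simp add: field_simps add_pos_nonneg)
  then have "bb (Suc k) * (lam * UU k / (1 + lam * TT k)) \<le> bb (Suc k) * (UU k / TT k)"
    by (intro mult_left_mono bb_nonneg)
  moreover have "dd k = bb (Suc k) * (lam * UU k / (1 + lam * TT k))" by (simp add: dd_def)
  ultimately show ?thesis by linarith
qed

definition cpv :: "nat \<Rightarrow> complex \<Rightarrow> complex" where
  "cpv n y = poly (map_poly complex_of_real (P n)) y"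

lemma cpv_0: "cpv 0 y = 1" by (simp add: cpv_def P0)
lemma cpv_1: "cpv (Suc 0) y = y" by (simp add: cpv_def P1 cmap_pCons)
lemma cpv_rec: "cpv (Suc (Suc k)) y = y * cpv (Suc k) y - complex_of_real (bb (Suc k)) * cpv k y"
  unfolding cpv_def by (rule P_rec_poly)

lemma cpv_SS: "even k \<Longrightarrow> cpv (Suc k) y = y * poly (map_poly complex_of_real (SS k)) y"
  by (simp add: cpv_def P_SS cmap_pCons)

definition DD :: "nat \<Rightarrow> real" where "DD n = (if even n then dd (n - 2) else 0)"

lemma Q_formula: assumes "n \<ge> 1" "y \<noteq> 0"
  shows "poly (map_poly complex_of_real (Q n)) y = cpv n y + complex_of_real (DD n) * cpv (n - 1) y / y"
proof (cases "even n")
  case False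
  then show ?thesis by (simp add: Q_odd DD_def cpv_def)
next
  case True
  with assms obtain k where k: "n = Suc (Suc k)" by (cases n; cases "n - 1") auto
  then have ek: "even k" using True by simp
  have "poly (map_poly complex_of_real (Q n)) y = cpv n y + complex_of_real (dd k) * poly (map_poly complex_of_real (SS k)) y"
    by (simp add: k Q_even[OF ek] cmap_add cmap_smult cpv_def)
  moreover have "cpv (n - 1) y / y = poly (map_poly complex_of_real (SS k)) y"
    using cpv_SS[OF ek, of y] assms(2) k by simp
  moreover have "DD n = dd k" using True k by (simp add: DD_def)
  ultimately show ?thesis by (metis times_divide_eq_right)
qed

lemma DD_nonneg: "DD n \<ge> 0"
  by (auto simp: DD_def intro!: dd_nonneg)

lemma DD_bound: assumes "even n" "n \<ge> 2" shows "DD n \<le> sqrt (real n) / 2 * (UU (n - 2) / TT (n - 2))"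
proof -
  obtain k where k: "n = Suc (Suc k)" using assms by (cases n; cases "n - 1") auto
  then have ek: "even k" using assms by simp
  have "DD n = dd k" using assms k by (simp add: DD_def)
  also have "\<dots> \<le> bb (Suc k) * (UU k / TT k)" by (rule dd_bound[OF ek])
  also have "\<dots> \<le> sqrt (real n) / 2 * (UU k / TT k)"
  proof (rule mult_right_mono)
    have "bb (Suc k) \<le> sqrt (real (Suc k)) / 2" by (rule bb_bound)
    also have "\<dots> \<le> sqrt (real n) / 2" using k by simp
    finally show "bb (Suc k) \<le> sqrt (real n) / 2" .
    show "0 \<le> UU k / TT k" using UU_pos[OF ek] TT_pos[OF ek] by simp
  qed
  finally show ?thesis using k by simp
qed

lemma bb_limit: "(\<lambda>n. bb n / sqrt (real n)) \<longlonglongrightarrow> 1 / sqrt 12"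
proof (rule freud_limit)
  show "bb 0 = 0" by (simp add: bb_def)
  show "\<And>n. 0 \<le> bb n" by (rule bb_nonneg)
  show "\<And>n. n \<ge> 1 \<Longrightarrow> 4 * bb n * (bb (n - 1) + bb n + bb (Suc n)) = real n" by (rule string_eq)
qed

lemma W_limit: "(\<lambda>j. UU (2 * j) / TT (2 * j)) \<longlonglongrightarrow> 0"
proof -
  have rl: "(\<lambda>n. bb (Suc n) / bb (Suc (Suc n))) \<longlonglongrightarrow> 1"
    by (rule ratio_limit[OF bb_limit]) simp
  have "(\<lambda>i. bb (Suc (2 * i)) / bb (Suc (Suc (2 * i)))) \<longlonglongrightarrow> 1"
    using LIMSEQ_subseq_LIMSEQ[OF rl, of "\<lambda>i. 2 * i"] by (simp add: strict_mono_def o_def)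
  moreover have "UU (2 * Suc i) / UU (2 * i) = bb (Suc (2 * i)) / bb (Suc (Suc (2 * i)))" for i
  proof -
    have "UU (2 * Suc i) = UU (Suc (Suc (2 * i)))" by simp
    also have "\<dots> = UU (2 * i) * bb (Suc (2 * i)) / bb (Suc (Suc (2 * i)))" by (rule UU_rec) simp
    finally show ?thesis using UU_pos[of "2 * i"] by simp
  qed
  ultimately have "(\<lambda>i. UU (2 * Suc i) / UU (2 * i)) \<longlonglongrightarrow> 1" by simp
  then have "(\<lambda>m. UU (2 * m) / (\<Sum>i\<le>m. UU (2 * i))) \<longlonglongrightarrow> 0"
    by (intro sumratio) (auto intro: UU_pos)
  then show ?thesis by (simp add: TT_sum)
qed

lemma point_bound:
  fixes x :: complex and n :: nat and \<delta> a \<eta> :: real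
  assumes n1: "n \<ge> 1" and a: "a > 0" and d: "\<delta> > 0"
    and geo: "\<bar>Im x\<bar> \<ge> \<delta> / 2 \<or> cmod x \<ge> a + \<delta> / 2"
    and bB: "\<And>k. k < n \<Longrightarrow> bb k \<le> B"
    and Bb: "4 * B \<le> sqrt (real n) * (a + \<delta> / 2)\<^sup>2"
    and y: "y = complex_of_real (root 4 (real n)) * x"
  shows "cpv n y \<noteq> 0 \<and> y \<noteq> 0 \<and> cmod (cpv (n - 1) y / cpv n y) / cmod y \<le> (4 / \<delta>\<^sup>2 + 2 / a\<^sup>2) / sqrt (real n)"
proof -
  define q where "q = root 4 (real n)"
  have q0: "q > 0" using n1 by (simp add: q_def)
  have qq: "q * q = sqrt (real n)" using root4_sq[of n] by (simp add: q_def power2_eq_square)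
  have x0: "x \<noteq> 0" using geo a d by auto
  have y0: "y \<noteq> 0" using y x0 q0 by (simp add: q_def)
  have cy: "cmod y = q * cmod x" using y q0 by (simp add: q_def norm_mult)
  obtain m where m: "n = Suc m" using n1 by (cases n) auto
  have rec: "\<And>k. cpv (Suc (Suc k)) y = y * cpv (Suc k) y - complex_of_real (bb (Suc k)) * cpv k y"
    by (rule cpv_rec)
  from geo show ?thesis
  proof
    assume im: "\<bar>Im x\<bar> \<ge> \<delta> / 2"
    have imy: "Im y = q * Im x" using y by (simp add: q_def)
    have imy0: "Im y \<noteq> 0" using imy im q0 d by auto
    have H: "cpv (Suc m) y \<noteq> 0 \<and> cmod (cpv m y / cpv (Suc m) y) \<le> 1 / \<bar>Im y\<bar>"
      using half_plane_bound[of "\<lambda>k. cpv k y" y bb m, OF cpv_0 _ rec bb_nonneg imy0] cpv_1 by simp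
    have iy: "\<bar>Im y\<bar> \<ge> q * (\<delta> / 2)" using imy im q0 by (simp add: abs_mult)
    have "1 / \<bar>Im y\<bar> \<le> 1 / (q * (\<delta> / 2))"
      using iy q0 d imy0 by (intro divide_left_mono) (auto intro!: mult_pos_pos)
    then have r: "cmod (cpv m y / cpv (Suc m) y) \<le> 1 / (q * (\<delta> / 2))"
      using H by linarith
    have "cmod y \<ge> q * (\<delta> / 2)"
    proof -
      have "\<bar>Im x\<bar> \<le> cmod x" by (rule abs_Im_le_cmod)
      then show ?thesis using cy im q0 by (simp add: mult_left_mono)
    qed
    then have "cmod (cpv m y / cpv (Suc m) y) / cmod y \<le> (1 / (q * (\<delta> / 2))) / (q * (\<delta> / 2))"
      using r q0 d by (intro frac_le) auto
    also have "\<dots> = (4 / \<delta>\<^sup>2) / (q * q)" using q0 d by (simp add: field_simps power2_eq_square)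
    also have "\<dots> \<le> (4 / \<delta>\<^sup>2 + 2 / a\<^sup>2) / (q * q)" using q0 a by (intro divide_right_mono) auto
    finally show ?thesis using H y0 qq m by simp
  next
    assume big: "cmod x \<ge> a + \<delta> / 2"
    have "(cmod y)\<^sup>2 = sqrt (real n) * (cmod x)\<^sup>2" using cy qq by (simp add: power2_eq_square)
    moreover have "(cmod x)\<^sup>2 \<ge> (a + \<delta> / 2)\<^sup>2" using big a d by (intro power_mono) auto
    moreover have "sqrt (real n) * (a + \<delta> / 2)\<^sup>2 \<le> sqrt (real n) * (cmod x)\<^sup>2"
      using calculation(2) by (intro mult_left_mono) auto
    ultimately have "4 * B \<le> (cmod y)\<^sup>2" using Bb by linarith
    then have H: "cpv (Suc m) y \<noteq> 0 \<and> cmod (cpv m y / cpv (Suc m) y) \<le> 2 / cmod y"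
      using disk_bound[of "\<lambda>k. cpv k y" y bb n B m, OF cpv_0 _ rec bb_nonneg y0 bB] cpv_1 m by simp
    have cyx: "cmod y \<ge> q * a" using cy big q0 d by (simp add: mult_left_mono)
    have cyp: "cmod y > 0" using y0 by simp
    have "cmod (cpv m y / cpv (Suc m) y) / cmod y \<le> (2 / cmod y) / cmod y"
      using H cyp by (intro divide_right_mono) auto
    also have "\<dots> = 2 / (cmod y * cmod y)" by simp
    also have "\<dots> \<le> 2 / ((q * a) * (q * a))"
    proof -
      have qa: "q * a > 0" using q0 a by simp
      have "(q * a) * (q * a) \<le> cmod y * cmod y" using cyx qa by (intro mult_mono) auto
      then show ?thesis using qa cyp by (intro divide_left_mono) (auto intro!: mult_pos_pos)
    qed
    also have "\<dots> = (2 / a\<^sup>2) / (q * q)" using q0 a by (simp add: field_simps power2_eq_square)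
    also have "\<dots> \<le> (4 / \<delta>\<^sup>2 + 2 / a\<^sup>2) / (q * q)" using q0 d by (intro divide_right_mono) auto
    finally show ?thesis using H y0 qq m by simp
  qed
qed

lemma main_ctx:
  fixes K :: "complex set"
  assumes K: "compact K" "K \<subseteq> - (complex_of_real ` {- root 4 (4/3) .. root 4 (4/3)})"
  shows "uniform_limit K
     (\<lambda>n x. poly (map_poly complex_of_real (P n)) (complex_of_real (root 4 (real n)) * x)
          / poly (map_poly complex_of_real (Q n)) (complex_of_real (root 4 (real n)) * x))
     (\<lambda>x. complex_of_real (root 4 12) *
          (x * phi (complex_of_real (root 4 (3/4)) * x)
           / (1 + (phi (complex_of_real (root 4 (3/4)) * x))\<^sup>2)))
     sequentially"
proof -
  define a where "a = root 4 (4/3)"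
  have a0: "a > 0" by (simp add: a_def)
  define S where "S = complex_of_real ` {-a..a}"
  have "compact S" unfolding S_def by (intro compact_continuous_image continuous_intros) auto
  then have "closed S" by (rule compact_imp_closed)
  moreover have "K \<inter> S = {}" using K(2) by (auto simp: S_def a_def)
  ultimately obtain \<delta> where d: "\<delta> > 0" and dK: "\<forall>x\<in>K. \<forall>s\<in>S. \<delta> \<le> dist x s"
    using separate_compact_closed[OF K(1)] by blast
  have geo: "\<bar>Im x\<bar> \<ge> \<delta> / 2 \<or> cmod x \<ge> a + \<delta> / 2" if "x \<in> K" for x
    by (rule geo_sep[OF a0 d]) (use dK that in \<open>auto simp: S_def\<close>)
  have x0: "x \<noteq> 0" if "x \<in> K" for x
    using K(2) that a0 by (auto simp: a_def)
  define c0 where "c0 = 1 / sqrt 12"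
  have c0: "c0 \<ge> 0" by (simp add: c0_def)
  define \<eta> where "\<eta> = ((a + \<delta> / 2)\<^sup>2 - a\<^sup>2) / 4"
  have eta: "\<eta> > 0"
  proof -
    have "0 < \<delta> * a + \<delta> * \<delta> / 4" using a0 d by (intro add_pos_pos mult_pos_pos) auto
    then show ?thesis using a0 d by (simp add: \<eta>_def power2_eq_square algebra_simps)
  qed
  have a4: "4 * c0 \<le> a\<^sup>2" using a_sq by (simp add: c0_def a_def)
  have B4: "4 * ((c0 + \<eta>) * sqrt (real n)) \<le> sqrt (real n) * (a + \<delta> / 2)\<^sup>2" for n
  proof -
    have "4 * \<eta> = (a + \<delta> / 2)\<^sup>2 - a\<^sup>2" by (simp add: \<eta>_def)
    then have "4 * (c0 + \<eta>) = 4 * c0 + ((a + \<delta> / 2)\<^sup>2 - a\<^sup>2)" by (simp add: distrib_left)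
    then have "4 * (c0 + \<eta>) \<le> (a + \<delta> / 2)\<^sup>2" using a4 by linarith
    then have "sqrt (real n) * (4 * (c0 + \<eta>)) \<le> sqrt (real n) * (a + \<delta> / 2)\<^sup>2" by (intro mult_left_mono) auto
    then show ?thesis by (simp add: algebra_simps)
  qed
  obtain N1 where N1: "\<And>n k. n \<ge> N1 \<Longrightarrow> k < n \<Longrightarrow> bb k \<le> (c0 + \<eta>) * sqrt (real n)"
    using sup_bound[OF bb_limit[folded c0_def] bb_nonneg eta c0] by blast
  define C2 where "C2 = 4 / \<delta>\<^sup>2 + 2 / a\<^sup>2"
  have C2: "C2 > 0" using d a0 by (simp add: C2_def add_pos_pos)
  show ?thesis unfolding uniform_limit_iff
  proof (intro allI impI)
    fix \<epsilon> :: real assume e: "\<epsilon> > 0"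
    define e' where "e' = min 1 \<epsilon> / (C2 + 1)"
    have e': "e' > 0" using e C2 by (simp add: e'_def)
    have e'C: "e' * C2 < min 1 \<epsilon>"
    proof -
      have "e' * C2 < e' * (C2 + 1)" using e' by simp
      also have "\<dots> = min 1 \<epsilon>" using C2 by (simp add: e'_def)
      finally show ?thesis .
    qed
    obtain J where J: "\<And>j. j \<ge> J \<Longrightarrow> UU (2 * j) / TT (2 * j) < e'"
      using order_tendstoD(2)[OF W_limit e'] by (auto simp: eventually_sequentially)
    show "\<forall>\<^sub>F n in sequentially. \<forall>x\<in>K. dist
            (poly (map_poly complex_of_real (P n)) (complex_of_real (root 4 (real n)) * x) /
             poly (map_poly complex_of_real (Q n)) (complex_of_real (root 4 (real n)) * x))
            (complex_of_real (root 4 12) * (x * phi (complex_of_real (root 4 (3 / 4)) * x) /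
               (1 + (phi (complex_of_real (root 4 (3 / 4)) * x))\<^sup>2))) < \<epsilon>"
    proof (rule eventually_sequentiallyI[of "N1 + 2 * J + 2"], intro ballI)
      fix n x assume n: "n \<ge> N1 + 2 * J + 2" and x: "x \<in> K"
      define y where "y = complex_of_real (root 4 (real n)) * x"
      have n1: "n \<ge> 1" using n by simp
      have PB: "cpv n y \<noteq> 0 \<and> y \<noteq> 0 \<and> cmod (cpv (n - 1) y / cpv n y) / cmod y \<le> C2 / sqrt (real n)"
        unfolding C2_def
        by (rule point_bound[OF n1 a0 d geo[OF x] _ B4 y_def]) (rule N1, use n in auto)
      define E where "E = complex_of_real (DD n) * (cpv (n - 1) y / cpv n y) / y"
      have QE: "poly (map_poly complex_of_real (Q n)) y = cpv n y * (1 + E)"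
      proof -
        have p0: "cpv n y \<noteq> 0" and y0: "y \<noteq> 0" using PB by auto
        have "cpv n y * (1 + E) = cpv n y + complex_of_real (DD n) * cpv (n - 1) y / y"
          using p0 y0 by (simp add: E_def field_simps)
        then show ?thesis using Q_formula[OF n1 y0] by simp
      qed
      have Eb: "cmod E \<le> e' * C2 / 2"
      proof (cases "even n")
        case False then show ?thesis using e' C2 by (simp add: E_def DD_def)
      next
        case True
        have "even (n - 2)" using True n by simp
        then obtain j where j: "n - 2 = 2 * j" by (elim evenE)
        have jJ: "j \<ge> J" using j n by simp
        have W: "UU (n - 2) / TT (n - 2) \<le> e'" using J[OF jJ] j by simp
        have "cmod E = DD n * (cmod (cpv (n - 1) y / cpv n y) / cmod y)"
          using DD_nonneg[of n] by (simp add: E_def norm_mult norm_divide)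
        also have "\<dots> \<le> (sqrt (real n) / 2 * e') * (C2 / sqrt (real n))"
        proof (rule mult_mono)
          have "DD n \<le> sqrt (real n) / 2 * (UU (n - 2) / TT (n - 2))" by (rule DD_bound[OF True]) (use n in simp)
          also have "\<dots> \<le> sqrt (real n) / 2 * e'" using W by (intro mult_left_mono) auto
          finally show "DD n \<le> sqrt (real n) / 2 * e'" .
          show "cmod (cpv (n - 1) y / cpv n y) / cmod y \<le> C2 / sqrt (real n)" using PB by simp
        qed (use e' in auto)
        also have "\<dots> = e' * C2 / 2" using n by simp
        finally show ?thesis .
      qed
      have E2: "cmod E \<le> 1/2" using Eb e'C by simp
      have "cmod (cpv n y / poly (map_poly complex_of_real (Q n)) y - 1) \<le> 2 * cmod E"
        by (rule ratio_alg[OF _ E2 QE]) (use PB in simp)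
      also have "\<dots> < \<epsilon>" using Eb e'C by simp
      finally have lt: "cmod (cpv n y / poly (map_poly complex_of_real (Q n)) y - 1) < \<epsilon>" .
      have g1: "complex_of_real (root 4 12) * (x * phi (complex_of_real (root 4 (3 / 4)) * x) /
               (1 + (phi (complex_of_real (root 4 (3 / 4)) * x))\<^sup>2)) = 1"
        by (rule phi_identity[OF x0[OF x]])
      show "dist
            (poly (map_poly complex_of_real (P n)) (complex_of_real (root 4 (real n)) * x) /
             poly (map_poly complex_of_real (Q n)) (complex_of_real (root 4 (real n)) * x))
            (complex_of_real (root 4 12) * (x * phi (complex_of_real (root 4 (3 / 4)) * x) /
               (1 + (phi (complex_of_real (root 4 (3 / 4)) * x))\<^sup>2))) < \<epsilon>"
        unfolding g1 using lt by (simp add: dist_norm cpv_def y_def)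
    qed
  qed
qed

end

end

theorem mainTheorem4:
  fixes lam1 :: real and P Q :: "nat \<Rightarrow> real poly" and K :: "complex set"
  assumes "lam1 \<ge> 0"
    and "monic_orthogonal_sequence freud_ip P"
    and "monic_orthogonal_sequence (sob_ip lam1) Q"
    and "compact K"
    and "K \<subseteq> - (complex_of_real ` {- root 4 (4/3) .. root 4 (4/3)})"
  shows "uniform_limit K
     (\<lambda>n x. poly (map_poly complex_of_real (P n)) (complex_of_real (root 4 (real n)) * x)
          / poly (map_poly complex_of_real (Q n)) (complex_of_real (root 4 (real n)) * x))
     (\<lambda>x. complex_of_real (root 4 12) *
          (x * phi (complex_of_real (root 4 (3/4)) * x)
           / (1 + (phi (complex_of_real (root 4 (3/4)) * x))\<^sup>2)))
     sequentially"
    by (rule main_ctx[OF assms(2) assms(3) assms(1) assms(4) assms(5)])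

end
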